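(* Under the setting, assumptions (A1)–(A2) and the algorithm PDAc-L described in the context, fix any $(x^\star,y^\star)\in\Omega$ and let $J(x,y)=\mathcal L(x,y^\star)-\mathcal L(x^\star,y)$. Then there exists a constant $C_1>0$ such that for every $N\ge1$, $$J(\hat x_N,\hat y_N)\le \frac{C_1}{N},\qquad\text{where } \hat x_N=\frac{1}{s_N}\sum_{n=1}^N\tau_nx_n,\ \hat y_N=\frac1{s_N}\sum_{n=1}^N\tau_ny_n,\ s_N=\sum_{n=1}^N\tau_n.$$
   Context: Let $f:\mathbb{R}^p\to(-\infty,+\infty]$ and $g:\mathbb{R}^q\to(-\infty,+\infty]$ be proper closed convex functions; $f^*(y)=\sup_u\{\langle y,u\rangle-f(u)\}$ is the Fenchel conjugate, $\mathrm{dom}(h)=\{x:h(x)<+\infty\}$, and for $\lambda>0$, $\mathrm{Prox}_{\lambda h}(x)=\arg\min_u\{h(u)+\frac{1}{2\lambda}\|u-x\|^2\}$. Let $\Phi:\mathrm{dom}(g)\times\mathrm{dom}(f^* )\to\mathbb{R}$ be continuous and $\mathcal L(x,y)=g(x)+\Phi(x,y)-f^*(y)$. Let $\Omega$ be the set of $(x^\star,y^\star)\in\mathrm{dom}(g)\times\mathrm{dom}(f^* )$ with $-\nabla_x\Phi(x^\star,y^\star)\in\partial g(x^\star)$ and $\nabla_y\Phi(x^\star,y^\star)\in\partial f^*(y^\star)$. Assume: (A1) $\Omega\neq\emptyset$, $\mathrm{dom}(g)\times\mathrm{dom}(f^* )\subseteq\mathrm{dom}(\Phi)$, and $\mathcal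 L(x^\star,y^\star)$ is finite; (A2) for each $y\in\mathrm{dom}(f^* )$, $\Phi(\cdot,y)$ is convex and differentiable, for each $x\in\mathrm{dom}(g)$, $\Phi(x,\cdot)$ is concave and differentiable, and for all bounded $\mathcal X\subset\mathbb R^q$, $\mathcal Y\subset\mathbb R^p$ there exist $L_{yy},L_{xx}\ge 0$, $L_{xy}>0$ with $\|\nabla_y\Phi(x,y)-\nabla_y\Phi(x,\tilde y)\|\le L_{yy}\|y-\tilde y\|$ and $\|\nabla_x\Phi(x,y)-\nabla_x\Phi(\tilde x,\tilde y)\|\le L_{xx}\|x-\tilde x\|+L_{xy}\|y-\tilde y\|$ for all $x,\tilde x\in\mathcal X\cap\mathrm{dom}(g)$, $y,\tilde y\in\mathcal Y\cap\mathrm{dom}(f^* )$. Algorithm PDAc-L: choose $\psi\in(1,1+\sqrt3)$, $\xi>0$, $\varphi>1$ with $\omega:=2\psi-\xi-\frac{\psi^3\varphi}{1+\psi}>0$, $\tau_{\max}>0$, $\nu\in(0,1)$, $\mu\in(0,1)$, $\eta\in[0,1)$, an integer $M\ge1$, $\beta>0$, $x_0\in\mathrm{dom}(g)$, $y_0\in\mathrm{dom}(f^* )$, $\tau_0\in(0,\tau_{\max}]$; set $z_0=x_0$, $\delta_0=1$. For $n=1,2,\dots$: (1) $z_n=\frac{\psi-1}{\psi}x_{n-1}+\frac1\psi z_{n-1}$ and $x_n=\mathrm{Prox}_{\tau_{n-1}g}(z_n-\tau_{n-1}\nabla_x\Phi(x_{n-1},y_{n-1}))$. (2) Let $\tau=\min\{\varphi\tau_{n-1},\tau_{\max}\}$;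 set $\tau_n=\tau\mu^i$ and $y_n=\mathrm{Prox}_{\beta\tau_n f^*}(y_{n-1}+\beta\tau_n\nabla_y\Phi(x_n,y_{n-1}))$, where $i$ is the smallest nonnegative integer such that $\frac{\tau_n\tau_{n-1}}{\xi}\|\theta_n\|^2+2\tau_n\Phi_n^y\le\nu r_n+(1-\nu)c_n$, with $\theta_n=\nabla_x\Phi(x_n,y_n)-\nabla_x\Phi(x_{n-1},y_{n-1})$, $\Phi_n^y=\Phi(x_n,y_{n-1})+\langle\nabla_y\Phi(x_n,y_{n-1}),y_n-y_{n-1}\rangle-\Phi(x_n,y_n)$, $r_n=\omega\delta_{n-1}\|x_n-x_{n-1}\|^2+\frac1\beta\|y_n-y_{n-1}\|^2$, $c_n=\frac{\eta}{|\mathcal I_n|}\sum_{i\in\mathcal I_n}r_i$, $\mathcal I_n=\{n-1,n-2,\dots,\max\{n-M,1\}\}$ (the $r_i$ for $i<n$ being the values from earlier iterations; for $n=1$, $\mathcal I_1=\emptyset$ and $c_1:=0$). (3) $\delta_n=\tau_n/\tau_{n-1}$. *)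

theory Defs
  imports "HOL-Analysis.Analysis" "HOL-Library.Extended_Real"
begin

definition edom :: "('a \<Rightarrow> ereal) \<Rightarrow> 'a set" where
  "edom h = {x. h x < \<infinity>}"

definition proper_fn :: "('a \<Rightarrow> ereal) \<Rightarrow> bool" where
  "proper_fn h \<longleftrightarrow> (\<forall>x. h x \<noteq> -\<infinity>) \<and> (\<exists>x. h x < \<infinity>)"

text \<open>closed = lower semicontinuous = closed epigraph; convex = convex epigraph\<close>
definition closed_fn :: "('a::topological_space \<Rightarrow> ereal) \<Rightarrow> bool" where
  "closed_fn h \<longleftrightarrow> closed {(x, t::real). h x \<le> ereal t}"

definition convex_fn :: "('a::real_vector \<Rightarrow> ereal) \<Rightarrow> bool" where
  "convex_fn h \<longleftrightarrow> convex {(x, t::real). h x \<le> ereal t}"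

definition fconj :: "('a::real_inner \<Rightarrow> ereal) \<Rightarrow> 'a \<Rightarrow> ereal" where
  "fconj f y = (SUP u. ereal (inner y u) - f u)"

definition subdiff :: "('a::real_inner \<Rightarrow> ereal) \<Rightarrow> 'a \<Rightarrow> 'a set" where
  "subdiff h x = {v. \<forall>z. h x + ereal (inner v (z - x)) \<le> h z}"

definition prox :: "real \<Rightarrow> ('a::real_normed_vector \<Rightarrow> ereal) \<Rightarrow> 'a \<Rightarrow> 'a" where
  "prox lam h x = (SOME u. \<forall>v. h u + ereal ((norm (u - x))\<^sup>2 / (2 * lam))
                               \<le> h v + ereal ((norm (v - x))\<^sup>2 / (2 * lam)))"

text \<open>Lagrangian L(x,y) = g(x) + Phi(x,y) - f*(y), with fs = f*\<close>
definition Lag :: "('a \<Rightarrow> ereal) \<Rightarrow> ('b \<Rightarrow> ereal) \<Rightarrow> ('a \<Rightarrow> 'b \<Rightarrow> real) \<Rightarrow> 'a \<Rightarrow> 'b \<Rightarrow> ereal" where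
  "Lag g fs Phi x y = g x + ereal (Phi x y) - fs y"

text \<open>Saddle set Omega; Phix, Phiy are the partial gradients of Phi\<close>
definition saddle_set :: "('a::real_inner \<Rightarrow> ereal) \<Rightarrow> ('b::real_inner \<Rightarrow> ereal)
    \<Rightarrow> ('a \<Rightarrow> 'b \<Rightarrow> 'a) \<Rightarrow> ('a \<Rightarrow> 'b \<Rightarrow> 'b) \<Rightarrow> ('a \<times> 'b) set" where
  "saddle_set g fs Phix Phiy =
     {(xs, ys). xs \<in> edom g \<and> ys \<in> edom fs \<and>
        - Phix xs ys \<in> subdiff g xs \<and> Phiy xs ys \<in> subdiff fs ys}"

text \<open>The iterates (x_n, y_n, z_n, tau_n) are generated by PDAc-L (steps (1)-(3)),
  with fs = f*, omega = 2 psi - xi - psi^3 phi/(1+psi), delta_0 = 1, delta_n = tau_n/tau_{n-1}.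
  The initial data x 0, y 0, tau 0 are free here (constrained in the theorem).\<close>
definition pdacl :: "('a::euclidean_space \<Rightarrow> ereal) \<Rightarrow> ('b::euclidean_space \<Rightarrow> ereal)
   \<Rightarrow> ('a \<Rightarrow> 'b \<Rightarrow> real) \<Rightarrow> ('a \<Rightarrow> 'b \<Rightarrow> 'a) \<Rightarrow> ('a \<Rightarrow> 'b \<Rightarrow> 'b)
   \<Rightarrow> real \<Rightarrow> real \<Rightarrow> real \<Rightarrow> real \<Rightarrow> real \<Rightarrow> real \<Rightarrow> real \<Rightarrow> nat \<Rightarrow> real
   \<Rightarrow> (nat \<Rightarrow> 'a) \<Rightarrow> (nat \<Rightarrow> 'b) \<Rightarrow> (nat \<Rightarrow> 'a) \<Rightarrow> (nat \<Rightarrow> real) \<Rightarrow> bool" where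
  "pdacl g fs Phi Phix Phiy psi xi phi taumax nu mu eta M beta x y z tau \<longleftrightarrow>
   (let omega = 2 * psi - xi - psi ^ 3 * phi / (1 + psi);
        delta = (\<lambda>k. if k = 0 then 1 else tau k / tau (k - 1));
        ytr = (\<lambda>n t. prox (beta * t) fs (y (n - 1) + (beta * t) *\<^sub>R Phiy (x n) (y (n - 1))));
        rr = (\<lambda>n v. omega * delta (n - 1) * (norm (x n - x (n - 1)))\<^sup>2
                     + (1 / beta) * (norm (v - y (n - 1)))\<^sup>2);
        II = (\<lambda>n. {max (n - M) 1 .. n - 1});
        cc = (\<lambda>n. if n = 1 then 0
                  else eta / real (card (II n)) * (\<Sum>k\<in>II n. rr k (y k)));
        ok = (\<lambda>n t. let v = ytr n t;
                        theta = Phix (x n) v - Phix (x (n - 1)) (y (n - 1));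
                        Py = Phi (x n) (y (n - 1)) + inner (Phiy (x n) (y (n - 1))) (v - y (n - 1))
                             - Phi (x n) v
                    in t * tau (n - 1) / xi * (norm theta)\<^sup>2 + 2 * t * Py
                         \<le> nu * rr n v + (1 - nu) * cc n);
        tbar = (\<lambda>n. min (phi * tau (n - 1)) taumax)
    in z 0 = x 0 \<and>
       (\<forall>n\<ge>1.
          z n = ((psi - 1) / psi) *\<^sub>R x (n - 1) + (1 / psi) *\<^sub>R z (n - 1) \<and>
          x n = prox (tau (n - 1)) g (z n - tau (n - 1) *\<^sub>R Phix (x (n - 1)) (y (n - 1))) \<and>
          (\<exists>i::nat. tau n = tbar n * mu ^ i \<and> ok n (tau n) \<and>
                    (\<forall>j<i. \<not> ok n (tbar n * mu ^ j))) \<and>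
          y n = ytr n (tau n)))"

end

theory Submission
  imports Defs
begin

lemma grad_ineq_convex:
  fixes F :: "'a::real_inner \<Rightarrow> real" and D :: 'a
  assumes cv: "convex_on S F" and u: "u \<in> S" and w: "w \<in> S"
    and der: "(F has_derivative (\<lambda>h. inner D h)) (at u)"
  shows "F u + inner D (w - u) \<le> F w"
proof -
  define d where "d = w - u"
  have lin: "((\<lambda>s::real. u + s *\<^sub>R d) has_derivative (\<lambda>s. s *\<^sub>R d)) (at 0)"
    by (auto intro!: derivative_eq_intros)
  have "((\<lambda>s::real. F (u + s *\<^sub>R d)) has_derivative (\<lambda>s. inner D (s *\<^sub>R d))) (at 0)"
    using has_derivative_compose[OF lin, of F "\<lambda>h. inner D h"] der by simp
  hence "((\<lambda>s::real. F (u + s *\<^sub>R d)) has_real_derivative inner D d) (at 0)"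
    unfolding has_field_derivative_def
    by (rule has_derivative_eq_rhs) (auto simp: fun_eq_iff)
  hence lim: "((\<lambda>s. (F (u + s *\<^sub>R d) - F (u + 0 *\<^sub>R d)) / (s - 0)) \<longlongrightarrow> inner D d) (at 0)"
    using DERIV_def[THEN iffD1] by (simp add: has_field_derivative_iff)
  hence lim2: "((\<lambda>s. (F (u + s *\<^sub>R d) - F u) / s) \<longlongrightarrow> inner D d) (at_right 0)"
    by (simp add: filterlim_at_split)
  have ev0: "(F (u + s *\<^sub>R d) - F u) / s \<le> F w - F u" if s0: "0 < s" and s1: "s < 1" for s :: real
  proof -
    have "u + s *\<^sub>R d = (1 - s) *\<^sub>R u + s *\<^sub>R w" by (simp add: d_def algebra_simps)
    hence "F (u + s *\<^sub>R d) \<le> (1 - s) * F u + s * F w"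
      using cv u w s0 s1 unfolding convex_on_def by auto
    hence h: "F (u + s *\<^sub>R d) - F u \<le> (F w - F u) * s" by (simp add: algebra_simps)
    show ?thesis
      using pos_divide_le_eq[of s] h s0 by blast
  qed
  have ev: "eventually (\<lambda>s. (F (u + s *\<^sub>R d) - F u) / s \<le> F w - F u) (at_right (0::real))"
    unfolding eventually_at_right_field using ev0 by (intro exI[of _ 1]) auto
  have "inner D d \<le> F w - F u"
    using tendsto_le[OF _ tendsto_const lim2 ev] by simp
  thus ?thesis by (simp add: d_def)
qed

lemma grad_ineq_concave:
  fixes F :: "'a::real_inner \<Rightarrow> real" and D :: 'a
  assumes cv: "concave_on S F" and u: "u \<in> S" and w: "w \<in> S"
    and der: "(F has_derivative (\<lambda>h. inner D h)) (at u)"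
  shows "F w \<le> F u + inner D (w - u)"
proof -
  have "((\<lambda>x. - F x) has_derivative (\<lambda>h. inner (- D) h)) (at u)"
    using has_derivative_minus[OF der] by simp
  from grad_ineq_convex[OF cv[unfolded concave_on_def] u w this] show ?thesis by simp
qed

lemma quad_bound:
  fixes r A B :: real
  assumes "0 \<le> r" "0 \<le> A" "r\<^sup>2 \<le> A * r + B"
  shows "r \<le> A + \<bar>B\<bar> + 1"
proof (rule ccontr)
  assume "\<not> ?thesis"
  hence h: "A + \<bar>B\<bar> + 1 < r" by simp
  have "r * (A + \<bar>B\<bar> + 1) \<le> r * r" using h assms(1) by (intro mult_left_mono) auto
  moreover have "r * (\<bar>B\<bar> + 1) > \<bar>B\<bar>"
  proof -
    have "r * (\<bar>B\<bar> + 1) \<ge> 1 * (\<bar>B\<bar> + 1)" using h assms by (intro mult_right_mono) auto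
    thus ?thesis by simp
  qed
  ultimately show False using assms(3) by (simp add: power2_eq_square algebra_simps)
qed

lemma prox_exists:
  fixes h :: "'a::euclidean_space \<Rightarrow> ereal"
  assumes pr: "proper_fn h" and cl: "closed_fn h" and lam: "lam > 0"
    and minor: "\<And>u. ereal (inner a u + b) \<le> h u"
  shows "\<exists>p. \<forall>v. h p + ereal ((norm (p - c))\<^sup>2 / (2 * lam)) \<le> h v + ereal ((norm (v - c))\<^sup>2 / (2 * lam))"
proof -
  define q where "q v = (norm (v - c))\<^sup>2 / (2 * lam)" for v
  obtain u0 where u0: "h u0 < \<infinity>" using pr unfolding proper_fn_def by auto
  have "h u0 \<noteq> - \<infinity>" using pr unfolding proper_fn_def by auto
  then obtain h0 where h0: "h u0 = ereal h0" using u0 by (cases "h u0") auto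
  define K where "K = h0 + q u0"
  define C where "C = {(u, t). h u \<le> ereal t} \<inter> {p. snd p + q (fst p) \<le> K}"
  have qc: "continuous_on UNIV q" unfolding q_def using lam by (intro continuous_intros) auto
  have cl1: "closed {(u, t::real). h u \<le> ereal t}" using cl unfolding closed_fn_def .
  have cl2: "closed {p::'a \<times> real. snd p + q (fst p) \<le> K}"
    by (rule closed_Collect_le) (auto intro!: continuous_intros continuous_on_compose2[OF qc])
  have "closed C" unfolding C_def using cl1 cl2 by auto
  define A where "A = 2 * lam * norm a"
  define B where "B = 2 * lam * (K - b + norm a * norm c)"
  define R0 where "R0 = A + \<bar>B\<bar> + 1"
  have bnd: "norm p \<le> (R0 + norm c) + (\<bar>K\<bar> + norm a * (R0 + norm c) + \<bar>b\<bar>)" if p: "p \<in> C" for p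
  proof -
    obtain u t where p': "p = (u, t)" by (cases p)
    have ht: "h u \<le> ereal t" and tk: "t + q u \<le> K" using p unfolding C_def p' by auto
    have low: "inner a u + b \<le> t" using order.trans[OF minor ht] by simp
    define r where "r = norm (u - c)"
    have nu: "norm u \<le> r + norm c" unfolding r_def using norm_triangle_ineq[of "u - c" c] by simp
    have "- (norm a * norm u) \<le> inner a u"
      using Cauchy_Schwarz_ineq2[of a u] by linarith
    hence "- (norm a * (r + norm c)) \<le> inner a u"
      using nu mult_left_mono[OF nu, of "norm a"] by auto
    hence "r\<^sup>2 / (2 * lam) \<le> K - b + norm a * (r + norm c)"
      using low tk unfolding q_def r_def by linarith
    hence "r\<^sup>2 \<le> (K - b + norm a * (r + norm c)) * (2 * lam)" using lam
      by (subst (asm) pos_divide_le_eq) auto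
    hence "r\<^sup>2 \<le> A * r + B" unfolding A_def B_def by (simp add: algebra_simps)
    hence rb: "r \<le> R0" unfolding R0_def by (rule quad_bound[rotated 2]) (auto simp: r_def A_def lam less_imp_le)
    have nub: "norm u \<le> R0 + norm c" using nu rb by linarith
    have "\<bar>inner a u\<bar> \<le> norm a * norm u" by (rule Cauchy_Schwarz_ineq2)
    also have "\<dots> \<le> norm a * (R0 + norm c)" by (rule mult_left_mono[OF nub]) simp
    finally have ia: "\<bar>inner a u\<bar> \<le> norm a * (R0 + norm c)" .
    have "q u \<ge> 0" unfolding q_def using lam by auto
    hence "\<bar>t\<bar> \<le> \<bar>K\<bar> + norm a * (R0 + norm c) + \<bar>b\<bar>" using tk low ia by linarith
    thus ?thesis using norm_Pair_le[of u t] nub unfolding p' by simp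
  qed
  have "bounded C" unfolding bounded_iff using bnd by blast
  hence "compact C" using \<open>closed C\<close> by (simp add: compact_eq_bounded_closed)
  have "(u0, h0) \<in> C" unfolding C_def K_def using h0 by auto
  hence "C \<noteq> {}" by auto
  have "continuous_on C (\<lambda>p. snd p + q (fst p))"
    by (auto intro!: continuous_intros continuous_on_compose2[OF qc])
  from continuous_attains_inf[OF \<open>compact C\<close> \<open>C \<noteq> {}\<close> this]
  obtain p1 where p1: "p1 \<in> C" and p1min: "\<And>p. p \<in> C \<Longrightarrow> snd p1 + q (fst p1) \<le> snd p + q (fst p)"
    by blast
  obtain u1 t1 where p1': "p1 = (u1, t1)" by (cases p1)
  have hu1: "h u1 \<le> ereal t1" and t1K: "t1 + q u1 \<le> K" using p1 unfolding C_def p1' by auto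
  show ?thesis
  proof (intro exI allI)
    fix v
    have lhs: "h u1 + ereal (q u1) \<le> ereal (t1 + q u1)" using add_right_mono[OF hu1, of "ereal (q u1)"] by simp
    show "h u1 + ereal ((norm (u1 - c))\<^sup>2 / (2 * lam)) \<le> h v + ereal ((norm (v - c))\<^sup>2 / (2 * lam))"
    proof (cases "h v")
      case (real hv)
      show ?thesis
      proof (cases "hv + q v \<le> K")
        case True
        hence "(v, hv) \<in> C" unfolding C_def using real by auto
        from p1min[OF this] have "t1 + q u1 \<le> hv + q v" unfolding p1' by simp
        hence "ereal (t1 + q u1) \<le> h v + ereal (q v)" using real by simp
        thus ?thesis using lhs unfolding q_def by (blast intro: order.trans)
      next
        case False
        hence "t1 + q u1 \<le> hv + q v" using t1K by linarith
        hence "ereal (t1 + q u1) \<le> h v + ereal (q v)" using real by simp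
        thus ?thesis using lhs unfolding q_def by (blast intro: order.trans)
      qed
    next
      case PInf
      thus ?thesis by simp
    next
      case MInf
      thus ?thesis using pr unfolding proper_fn_def by auto
    qed
  qed
qed

lemma nsq_add: "(norm (a + b))\<^sup>2 = (norm a)\<^sup>2 + 2 * inner a b + (norm (b::'a::real_inner))\<^sup>2"
  by (simp add: power2_norm_eq_inner inner_add_left inner_add_right inner_commute)

lemma nsq_diff: "(norm (a - b))\<^sup>2 = (norm a)\<^sup>2 - 2 * inner a b + (norm (b::'a::real_inner))\<^sup>2"
  by (simp add: power2_norm_eq_inner inner_diff_left inner_diff_right inner_commute)

lemma small_s:
  fixes X Y Z :: real
  assumes "\<And>s. 0 < s \<Longrightarrow> s \<le> 1 \<Longrightarrow> X \<le> Y + s * Z" "Z \<ge> 0"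
  shows "X \<le> Y"
proof (rule ccontr)
  assume "\<not> X \<le> Y"
  define s where "s = min 1 ((X - Y) / (2 * (Z + 1)))"
  have s0: "0 < s" unfolding s_def using \<open>\<not> X \<le> Y\<close> assms(2) by auto
  have s1: "s \<le> 1" unfolding s_def by auto
  have "s * Z \<le> ((X - Y) / (2 * (Z + 1))) * Z" unfolding s_def using assms(2)
    by (intro mult_right_mono) auto
  also have "\<dots> < X - Y"
  proof -
    have "((X - Y) / (2 * (Z + 1))) * Z = (X - Y) * (Z / (2 * (Z + 1)))" by simp
    also have "\<dots> < (X - Y) * 1"
      using \<open>\<not> X \<le> Y\<close> assms(2) by (intro mult_strict_left_mono) (auto simp: divide_less_eq)
    finally show ?thesis by simp
  qed
  finally show False using assms(1)[OF s0 s1] by linarith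
qed

lemma convex_fn_comb:
  fixes h :: "'a::real_vector \<Rightarrow> ereal"
  assumes cv: "convex_fn h" and "h p = ereal P" "h v = ereal V" "0 \<le> s" "s \<le> 1"
  shows "h ((1 - s) *\<^sub>R p + s *\<^sub>R v) \<le> ereal ((1 - s) * P + s * V)"
proof -
  have "(p, P) \<in> {(x, t::real). h x \<le> ereal t}" "(v, V) \<in> {(x, t::real). h x \<le> ereal t}"
    using assms by auto
  from convexD[OF cv[unfolded convex_fn_def] this, of "1 - s" s] assms(4,5)
  show ?thesis by simp
qed

lemma prox_vi:
  fixes h :: "'a::euclidean_space \<Rightarrow> ereal"
  assumes pr: "proper_fn h" and cv: "convex_fn h" and lam: "lam > 0"
    and ex: "\<exists>p. \<forall>v. h p + ereal ((norm (p - c))\<^sup>2 / (2 * lam)) \<le> h v + ereal ((norm (v - c))\<^sup>2 / (2 * lam))"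
  shows "prox lam h c \<in> edom h \<and> (\<forall>v \<in> edom h. inner (c - prox lam h c) (v - prox lam h c)
           \<le> lam * (real_of_ereal (h v) - real_of_ereal (h (prox lam h c))))"
proof -
  define p where "p = prox lam h c"
  define q where "q v = (norm (v - c))\<^sup>2 / (2 * lam)" for v
  have pmin: "\<And>v. h p + ereal (q v') \<le> h v + ereal (q v)" if "v' = p" for v'
    using someI_ex[OF ex] that unfolding p_def prox_def q_def by blast
  have pmin: "\<And>v. h p + ereal (q p) \<le> h v + ereal (q v)" using pmin by blast
  obtain u0 where u0: "h u0 < \<infinity>" using pr unfolding proper_fn_def by auto
  have "h p + ereal (q p) < \<infinity>" using pmin[of u0] u0 by (auto simp: order.strict_trans1)
  hence pd: "h p < \<infinity>" by auto
  have "h p \<noteq> - \<infinity>" using pr unfolding proper_fn_def by auto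
  then obtain P where P: "h p = ereal P" using pd by (cases "h p") auto
  have vi: "inner (c - p) (v - p) \<le> lam * (real_of_ereal (h v) - P)" if v: "v \<in> edom h" for v
  proof -
    have "h v \<noteq> - \<infinity>" using pr unfolding proper_fn_def by auto
    then obtain V where V: "h v = ereal V" using v unfolding edom_def by (cases "h v") auto
    have key: "lam * (P - V) \<le> inner (p - c) (v - p) + s * ((norm (v - p))\<^sup>2 / 2)"
      if s0: "0 < s" and s1: "s \<le> 1" for s
    proof -
      define us where "us = (1 - s) *\<^sub>R p + s *\<^sub>R v"
      have "h us \<le> ereal ((1 - s) * P + s * V)"
        unfolding us_def using convex_fn_comb[OF cv P V] s0 s1 by auto
      hence "h p + ereal (q p) \<le> ereal ((1 - s) * P + s * V) + ereal (q us)"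
        using pmin[of us] by (meson add_right_mono order.trans)
      hence i1: "P + q p \<le> (1 - s) * P + s * V + q us" using P by simp
      have e: "us - c = (p - c) + s *\<^sub>R (v - p)" unfolding us_def by (simp add: algebra_simps)
      have "(norm (us - c))\<^sup>2 = (norm (p - c))\<^sup>2 + 2 * s * inner (p - c) (v - p) + s\<^sup>2 * (norm (v - p))\<^sup>2"
        unfolding e nsq_add by (simp add: power_mult_distrib)
      hence "q us = q p + (2 * s * inner (p - c) (v - p) + s\<^sup>2 * (norm (v - p))\<^sup>2) / (2 * lam)"
        unfolding q_def by (simp add: add_divide_distrib)
      with i1 have "s * (P - V) \<le> (2 * s * inner (p - c) (v - p) + s\<^sup>2 * (norm (v - p))\<^sup>2) / (2 * lam)"
        by (simp add: algebra_simps)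
      hence "s * (P - V) * (2 * lam) \<le> 2 * s * inner (p - c) (v - p) + s\<^sup>2 * (norm (v - p))\<^sup>2"
        using lam by (simp add: pos_le_divide_eq)
      hence "s * (2 * (lam * (P - V))) \<le> s * (2 * (inner (p - c) (v - p) + s * ((norm (v - p))\<^sup>2 / 2)))"
        by (simp add: algebra_simps power2_eq_square)
      hence "2 * (lam * (P - V)) \<le> 2 * (inner (p - c) (v - p) + s * ((norm (v - p))\<^sup>2 / 2))"
        using s0 by (simp add: mult_le_cancel_left_pos)
      thus ?thesis by simp
    qed
    have "lam * (P - V) \<le> inner (p - c) (v - p)"
      by (rule small_s[OF key]) auto
    hence "inner (c - p) (v - p) \<le> lam * (V - P)"
      by (simp add: inner_diff_left algebra_simps)
    thus ?thesis using V by simp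
  qed
  show ?thesis using pd vi P unfolding p_def[symmetric] edom_def by auto
qed

lemma fconj_le_iff: "fconj f y \<le> ereal t \<longleftrightarrow> (\<forall>u. ereal (inner y u) - f u \<le> ereal t)"
  unfolding fconj_def by (simp add: SUP_le_iff)

lemma fconj_minor:
  assumes "proper_fn f"
  obtains u0 r0 where "\<And>y. ereal (inner y u0 - r0) \<le> fconj f y"
proof -
  obtain u0 where u0: "f u0 < \<infinity>" using assms unfolding proper_fn_def by auto
  have "f u0 \<noteq> - \<infinity>" using assms unfolding proper_fn_def by auto
  then obtain r0 where r0: "f u0 = ereal r0" using u0 by (cases "f u0") auto
  have "ereal (inner y u0 - r0) \<le> fconj f y" for y
  proof -
    have "ereal (inner y u0 - r0) = ereal (inner y u0) - f u0" using r0 by simp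
    also have "\<dots> \<le> fconj f y" unfolding fconj_def by (rule SUP_upper) simp
    finally show ?thesis .
  qed
  thus ?thesis using that by blast
qed

lemma fconj_epi:
  fixes f :: "'a::real_inner \<Rightarrow> ereal"
  assumes "proper_fn f"
  shows "{(y, t::real). fconj f y \<le> ereal t} = (\<Inter>u\<in>{u. f u < \<infinity>}. {p. inner (u, -1::real) p \<le> real_of_ereal (f u)})"
proof -
  have *: "ereal (inner y u) - f u \<le> ereal t \<longleftrightarrow> inner y u - t \<le> real_of_ereal (f u)" if fu: "f u < \<infinity>" for y u t
  proof -
    have "f u \<noteq> - \<infinity>" using assms unfolding proper_fn_def by auto
    then obtain r where "f u = ereal r" using fu by (cases "f u") auto
    thus ?thesis by auto
  qed
  have **: "ereal (inner y u) - f u \<le> ereal t" if "\<not> f u < \<infinity>" for y u t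
    using that by auto
  show ?thesis
  proof (intro set_eqI iffI)
    fix p :: "'a \<times> real"
    assume "p \<in> {(y, t). fconj f y \<le> ereal t}"
    then obtain y t where p: "p = (y, t)" and H: "\<And>u. ereal (inner y u) - f u \<le> ereal t"
      unfolding fconj_le_iff by auto
    show "p \<in> (\<Inter>u\<in>{u. f u < \<infinity>}. {p. inner (u, -1::real) p \<le> real_of_ereal (f u)})"
      using * H unfolding p by (auto simp: inner_Pair inner_commute)
  next
    fix p :: "'a \<times> real"
    assume A: "p \<in> (\<Inter>u\<in>{u. f u < \<infinity>}. {p. inner (u, -1::real) p \<le> real_of_ereal (f u)})"
    obtain y t where p: "p = (y, t)" by (cases p)
    have "ereal (inner y u) - f u \<le> ereal t" for u
    proof (cases "f u < \<infinity>")
      case True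
      with A have "inner u y - t \<le> real_of_ereal (f u)" unfolding p by (auto simp: inner_Pair)
      hence "inner y u - t \<le> real_of_ereal (f u)" by (simp add: inner_commute)
      thus ?thesis using *[OF True] by blast
    next
      case False thus ?thesis using ** by blast
    qed
    thus "p \<in> {(y, t). fconj f y \<le> ereal t}" unfolding p fconj_le_iff by auto
  qed
qed

lemma fconj_closed: "proper_fn f \<Longrightarrow> closed_fn (fconj f)"
  unfolding closed_fn_def by (subst fconj_epi) (auto intro!: closed_INT closed_halfspace_le)

lemma fconj_convex: "proper_fn f \<Longrightarrow> convex_fn (fconj f)"
  unfolding convex_fn_def by (subst fconj_epi) (auto intro!: convex_INT convex_halfspace_le)

lemma fconj_proper:
  assumes "proper_fn f" "fconj f y0 < \<infinity>"
  shows "proper_fn (fconj f)"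
proof -
  obtain u0 r0 where "\<And>y. ereal (inner y u0 - r0) \<le> fconj f y" using fconj_minor[OF assms(1)] by blast
  hence "fconj f y \<noteq> - \<infinity>" for y by (metis MInfty_neq_ereal(1) ereal_infty_less_eq(2))
  thus ?thesis unfolding proper_fn_def using assms(2) by auto
qed

lemma edom_convex:
  assumes "proper_fn h" "convex_fn h"
  shows "convex (edom h)"
proof (rule convexI)
  fix p v :: 'a and a b :: real
  assume p: "p \<in> edom h" and v: "v \<in> edom h" and a: "0 \<le> a" and b: "0 \<le> b" and ab: "a + b = 1"
  have "h p \<noteq> - \<infinity>" "h v \<noteq> - \<infinity>" using assms unfolding proper_fn_def by auto
  then obtain P V where P: "h p = ereal P" and V: "h v = ereal V" using p v unfolding edom_def
    by (cases "h p"; cases "h v") auto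
  have a1: "a = 1 - b" using ab by simp
  have "h ((1 - b) *\<^sub>R p + b *\<^sub>R v) \<le> ereal ((1 - b) * P + b * V)"
    using convex_fn_comb[OF assms(2) P V b] ab a by auto
  hence "h (a *\<^sub>R p + b *\<^sub>R v) \<le> ereal ((1 - b) * P + b * V)" unfolding a1 .
  thus "a *\<^sub>R p + b *\<^sub>R v \<in> edom h" unfolding edom_def by (auto intro: le_less_trans)
qed

lemma edom_finite:
  assumes "proper_fn h" "u \<in> edom h"
  shows "h u = ereal (real_of_ereal (h u))"
proof -
  have "h u \<noteq> - \<infinity>" using assms unfolding proper_fn_def by auto
  thus ?thesis using assms(2) unfolding edom_def by (cases "h u") auto
qed

lemma nsq_comb:
  fixes a b :: "'a::real_inner"
  shows "(norm ((1 - t) *\<^sub>R a + t *\<^sub>R b))\<^sup>2 = (1 - t) * (norm a)\<^sup>2 + t * (norm b)\<^sup>2 - t * (1 - t) * (norm (a - b))\<^sup>2"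
  by (simp add: power2_norm_eq_inner inner_add_left inner_add_right inner_diff_left inner_diff_right
      inner_commute algebra_simps)

lemma nsq_diff_scale:
  fixes u v :: "'a::real_inner"
  shows "(norm (v - k *\<^sub>R u))\<^sup>2 = (norm v)\<^sup>2 - 2 * k * inner v u + k\<^sup>2 * (norm u)\<^sup>2"
  unfolding power2_norm_eq_inner
  by (simp add: inner_diff_left inner_diff_right inner_commute power2_eq_square algebra_simps)

lemma scal_b:
  fixes psi Z1 Z2 X1 E :: real
  assumes "psi > 1" "Z2 = (1 - 1 / psi) * X1 + (1 / psi) * Z1 - (1 / psi) * (1 - 1 / psi) * E"
  shows "(psi / (psi - 1)) * (Z1 - Z2) = Z1 - X1 + (1 / psi) * E"
proof -
  have p0: "psi \<noteq> 0" "psi - 1 \<noteq> 0" using assms(1) by auto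
  have "Z1 - Z2 = ((psi - 1) / psi) * (Z1 - X1 + (1 / psi) * E)"
    unfolding assms(2) using p0 by (simp add: field_simps)
  thus ?thesis using p0 by simp
qed

lemma xpart_norm:
  fixes u w :: "'a::real_inner"
  assumes psi: "psi > 1" and d: "0 < d" "d \<le> phi"
  shows "- ((1 + psi) / psi) * (norm (u + w))\<^sup>2 + 2 * psi * d * inner w u + xi * d * (norm u)\<^sup>2
         \<le> - d * (2 * psi - xi - psi ^ 3 * phi / (1 + psi)) * (norm u)\<^sup>2"
proof -
  define c where "c = (1 + psi) / psi"
  have c0: "c > 0" unfolding c_def using psi by auto
  define v where "v = u + w"
  have wu: "inner w u = inner v u - (norm u)\<^sup>2" unfolding v_def
    by (simp add: inner_add_left power2_norm_eq_inner)
  have "0 \<le> (norm (v - (psi * d / c) *\<^sub>R u))\<^sup>2" by simp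
  also have "\<dots> = (norm v)\<^sup>2 - 2 * (psi * d / c) * inner v u + (psi * d / c)\<^sup>2 * (norm u)\<^sup>2"
    by (rule nsq_diff_scale)
  finally have "0 \<le> c * ((norm v)\<^sup>2 - 2 * (psi * d / c) * inner v u + (psi * d / c)\<^sup>2 * (norm u)\<^sup>2)"
    using c0 by simp
  also have "\<dots> = c * (norm v)\<^sup>2 - 2 * psi * d * inner v u + (psi * d)\<^sup>2 / c * (norm u)\<^sup>2"
    using c0 by (simp add: field_simps power2_eq_square)
  finally have key: "- c * (norm v)\<^sup>2 + 2 * psi * d * inner v u \<le> (psi * d)\<^sup>2 / c * (norm u)\<^sup>2" by simp
  have "(psi * d)\<^sup>2 / c = d * (psi ^ 3 * d / (1 + psi))" unfolding c_def using psi
    by (simp add: field_simps power2_eq_square power3_eq_cube)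
  also have "\<dots> \<le> d * (psi ^ 3 * phi / (1 + psi))"
    using d psi by (intro mult_left_mono divide_right_mono mult_left_mono) auto
  finally have k2: "(psi * d)\<^sup>2 / c * (norm u)\<^sup>2 \<le> d * (psi ^ 3 * phi / (1 + psi)) * (norm u)\<^sup>2"
    by (intro mult_right_mono) auto
  have "- ((1 + psi) / psi) * (norm (u + w))\<^sup>2 + 2 * psi * d * inner w u + xi * d * (norm u)\<^sup>2
      = (- c * (norm v)\<^sup>2 + 2 * psi * d * inner v u) - 2 * psi * d * (norm u)\<^sup>2 + xi * d * (norm u)\<^sup>2"
    unfolding wu c_def v_def by (simp add: algebra_simps)
  also have "\<dots> \<le> d * (psi ^ 3 * phi / (1 + psi)) * (norm u)\<^sup>2 - 2 * psi * d * (norm u)\<^sup>2 + xi * d * (norm u)\<^sup>2"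
    using key k2 by linarith
  also have "\<dots> = - d * (2 * psi - xi - psi ^ 3 * phi / (1 + psi)) * (norm u)\<^sup>2"
    by (simp add: algebra_simps)
  finally show ?thesis .
qed

lemma xpart:
  fixes x0 x1 zc z1 z2 xs :: "'a::real_inner"
  assumes psi: "psi > 1" and d: "0 < d" "d \<le> phi"
    and z1: "z1 = ((psi - 1) / psi) *\<^sub>R x0 + (1 / psi) *\<^sub>R zc"
    and z2: "z2 = ((psi - 1) / psi) *\<^sub>R x1 + (1 / psi) *\<^sub>R z1"
  shows "2 * inner (x1 - z1) (xs - x1) + 2 * d * inner (x0 - zc) (x1 - x0) + xi * d * (norm (x1 - x0))\<^sup>2
    \<le> (psi / (psi - 1)) * ((norm (z1 - xs))\<^sup>2 - (norm (z2 - xs))\<^sup>2)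
       - d * (2 * psi - xi - psi ^ 3 * phi / (1 + psi)) * (norm (x1 - x0))\<^sup>2"
proof -
  define u where "u = x1 - x0"
  define w where "w = x0 - z1"
  have uw: "u + w = x1 - z1" unfolding u_def w_def by simp
  have a: "2 * inner (x1 - z1) (xs - x1) = (norm (xs - z1))\<^sup>2 - (norm (x1 - z1))\<^sup>2 - (norm (xs - x1))\<^sup>2"
  proof -
    have "xs - z1 = (x1 - z1) + (xs - x1)" by simp
    hence "(norm (xs - z1))\<^sup>2 = (norm (x1 - z1))\<^sup>2 + 2 * inner (x1 - z1) (xs - x1) + (norm (xs - x1))\<^sup>2"
      by (metis nsq_add)
    thus ?thesis by simp
  qed
  have "z2 - xs = (1 - 1 / psi) *\<^sub>R (x1 - xs) + (1 / psi) *\<^sub>R (z1 - xs)"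
    unfolding z2 using psi by (simp add: algebra_simps diff_divide_distrib)
  hence "(norm (z2 - xs))\<^sup>2 = (1 - 1 / psi) * (norm (x1 - xs))\<^sup>2 + (1 / psi) * (norm (z1 - xs))\<^sup>2
           - (1 / psi) * (1 - 1 / psi) * (norm (x1 - z1))\<^sup>2"
    using nsq_comb[of "1 / psi" "x1 - xs" "z1 - xs"] by simp
  hence b: "(psi / (psi - 1)) * ((norm (z1 - xs))\<^sup>2 - (norm (z2 - xs))\<^sup>2)
       = (norm (z1 - xs))\<^sup>2 - (norm (x1 - xs))\<^sup>2 + (1 / psi) * (norm (x1 - z1))\<^sup>2"
    using psi by (intro scal_b) auto
  have xz: "x0 - zc = psi *\<^sub>R w"
  proof -
    have e1: "psi * ((psi - 1) / psi) = psi - 1" "psi * (1 / psi) = 1" using psi by auto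
    have "psi *\<^sub>R z1 = (psi * ((psi - 1) / psi)) *\<^sub>R x0 + (psi * (1 / psi)) *\<^sub>R zc"
      unfolding z1 by (simp add: scaleR_add_right)
    hence "psi *\<^sub>R z1 = (psi - 1) *\<^sub>R x0 + zc" unfolding e1 by simp
    thus ?thesis unfolding w_def by (simp add: algebra_simps)
  qed
  hence c: "2 * d * inner (x0 - zc) (x1 - x0) = 2 * psi * d * inner w u" unfolding u_def by simp
  have nx: "(norm (xs - x1))\<^sup>2 = (norm (x1 - xs))\<^sup>2" "(norm (xs - z1))\<^sup>2 = (norm (z1 - xs))\<^sup>2"
    by (simp_all add: norm_minus_commute)
  have "2 * inner (x1 - z1) (xs - x1) + 2 * d * inner (x0 - zc) (x1 - x0) + xi * d * (norm (x1 - x0))\<^sup>2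
     = (psi / (psi - 1)) * ((norm (z1 - xs))\<^sup>2 - (norm (z2 - xs))\<^sup>2)
       + (- ((1 + psi) / psi) * (norm (u + w))\<^sup>2 + 2 * psi * d * inner w u + xi * d * (norm u)\<^sup>2)"
    unfolding a b uw nx u_def[symmetric] xz using psi by (simp add: field_simps)
  also have "\<dots> \<le> (psi / (psi - 1)) * ((norm (z1 - xs))\<^sup>2 - (norm (z2 - xs))\<^sup>2)
       - d * (2 * psi - xi - psi ^ 3 * phi / (1 + psi)) * (norm u)\<^sup>2"
    using xpart_norm[OF psi d, of u w xi] by simp
  finally show ?thesis unfolding u_def .
qed

lemma young_inner:
  fixes p q :: "'a::real_inner"
  assumes k: "k > 0"
  shows "- inner p q \<le> (k / 2) * (norm p)\<^sup>2 + (1 / (2 * k)) * (norm q)\<^sup>2"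
proof -
  have "0 \<le> (norm (k *\<^sub>R p + q))\<^sup>2" by simp
  also have "\<dots> = k\<^sup>2 * (norm p)\<^sup>2 + 2 * k * inner p q + (norm q)\<^sup>2"
    by (simp add: nsq_add power_mult_distrib)
  finally have "- (2 * k) * inner p q \<le> k\<^sup>2 * (norm p)\<^sup>2 + (norm q)\<^sup>2" by simp
  hence "(2 * k) * (- inner p q) \<le> (2 * k) * ((k / 2) * (norm p)\<^sup>2 + (1 / (2 * k)) * (norm q)\<^sup>2)"
    using k by (simp add: algebra_simps power2_eq_square)
  moreover have "0 < 2 * k" using k by simp
  ultimately show ?thesis using mult_le_cancel_left_pos[of "2 * k"] by blast
qed

lemma step_ineq:
  fixes x0 x1 zc z1 z2 xs a0 a1 :: "'a::real_inner" and y0 y1 ys b :: "'b::real_inner"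
  assumes psi: "psi > 1" and xi: "xi > 0" and beta: "beta > 0" and T: "T > 0" and T0: "T0 > 0"
    and dphi: "T / T0 \<le> phi"
    and z1: "z1 = ((psi - 1) / psi) *\<^sub>R x0 + (1 / psi) *\<^sub>R zc"
    and z2: "z2 = ((psi - 1) / psi) *\<^sub>R x1 + (1 / psi) *\<^sub>R z1"
    and I1: "inner (z1 - T *\<^sub>R a1 - x1) (xs - x1) \<le> T * (Gxs - Gx1)"
    and I2: "inner (zc - T0 *\<^sub>R a0 - x0) (x1 - x0) \<le> T0 * (Gx1 - Gx0)"
    and I3: "Pny1 + inner a1 (xs - x0) \<le> Pxsy1"
    and I4: "inner (y0 + (beta * T) *\<^sub>R b - y1) (ys - y1) \<le> beta * T * (Fys - Fy1)"
    and I5: "Pnys \<le> Pny0 + inner b (ys - y0)"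
  shows "2 * T * (Gx0 + Pnys - Fys - Gxs - Pxsy1 + Fy1)
    \<le> (psi / (psi - 1)) * ((norm (z1 - xs))\<^sup>2 - (norm (z2 - xs))\<^sup>2)
       - (T / T0) * (2 * psi - xi - psi ^ 3 * phi / (1 + psi)) * (norm (x1 - x0))\<^sup>2
       + (1 / beta) * ((norm (y0 - ys))\<^sup>2 - (norm (y1 - ys))\<^sup>2 - (norm (y1 - y0))\<^sup>2)
       + (T * T0 / xi) * (norm (a1 - a0))\<^sup>2 + 2 * T * (Pny0 + inner b (y1 - y0) - Pny1)"
proof -
  define d where "d = T / T0"
  have d0: "d > 0" unfolding d_def using T T0 by auto
  have dT0: "d * T0 = T" unfolding d_def using T0 by auto
  have I1': "T * Gx1 - T * Gxs \<le> inner (x1 - z1) (xs - x1) + T * inner a1 (xs - x1)"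
    using I1 by (simp add: inner_diff_left algebra_simps)
  have "d * inner (zc - T0 *\<^sub>R a0 - x0) (x1 - x0) \<le> d * (T0 * (Gx1 - Gx0))"
    using I2 d0 by (intro mult_left_mono) auto
  hence I2': "T * Gx0 - T * Gx1 \<le> d * inner (x0 - zc) (x1 - x0) + T * inner a0 (x1 - x0)"
    unfolding dT0[symmetric] by (simp add: inner_diff_left algebra_simps)
  have split: "inner a1 (xs - x1) + inner a0 (x1 - x0) = inner a1 (xs - x0) - inner (a1 - a0) (x1 - x0)"
    by (simp add: inner_diff_left inner_diff_right algebra_simps)
  have yg: "- inner (a1 - a0) (x1 - x0) \<le> ((T0 / xi) / 2) * (norm (a1 - a0))\<^sup>2 + (1 / (2 * (T0 / xi))) * (norm (x1 - x0))\<^sup>2"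
    using young_inner[of "T0 / xi"] T0 xi by auto
  hence yg: "T * (- inner (a1 - a0) (x1 - x0)) \<le> (T * T0 / xi) / 2 * (norm (a1 - a0))\<^sup>2 + (xi * d / 2) * (norm (x1 - x0))\<^sup>2"
    using T mult_left_mono[OF yg, of T] unfolding d_def by (simp add: algebra_simps)
  have I3': "T * inner a1 (xs - x0) \<le> T * (Pxsy1 - Pny1)"
    using I3 T by (intro mult_left_mono) auto
  have XP: "2 * inner (x1 - z1) (xs - x1) + 2 * d * inner (x0 - zc) (x1 - x0) + xi * d * (norm (x1 - x0))\<^sup>2
    \<le> (psi / (psi - 1)) * ((norm (z1 - xs))\<^sup>2 - (norm (z2 - xs))\<^sup>2)
       - d * (2 * psi - xi - psi ^ 3 * phi / (1 + psi)) * (norm (x1 - x0))\<^sup>2"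
    by (rule xpart[OF psi d0 dphi[folded d_def] z1 z2])
  have xsum: "2 * T * (Gx0 + Pny1 - Gxs - Pxsy1)
    \<le> (psi / (psi - 1)) * ((norm (z1 - xs))\<^sup>2 - (norm (z2 - xs))\<^sup>2)
       - d * (2 * psi - xi - psi ^ 3 * phi / (1 + psi)) * (norm (x1 - x0))\<^sup>2
       + (T * T0 / xi) * (norm (a1 - a0))\<^sup>2"
  proof -
    have "T * (Gx0 - Gxs) \<le> inner (x1 - z1) (xs - x1) + d * inner (x0 - zc) (x1 - x0)
           + T * (inner a1 (xs - x1) + inner a0 (x1 - x0))"
      using I1' I2' by (simp add: algebra_simps)
    also have "T * (inner a1 (xs - x1) + inner a0 (x1 - x0)) = T * inner a1 (xs - x0) + T * (- inner (a1 - a0) (x1 - x0))"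
      unfolding split by (simp add: algebra_simps)
    finally show ?thesis using I3' yg XP by (simp add: algebra_simps)
  qed
  have I4': "beta * T * Fy1 - beta * T * Fys \<le> inner (y1 - y0) (ys - y1) - beta * T * inner b (ys - y1)"
    using I4 by (simp add: inner_diff_left inner_add_left algebra_simps)
  have yid: "2 * inner (y1 - y0) (ys - y1) = (norm (y0 - ys))\<^sup>2 - (norm (y1 - y0))\<^sup>2 - (norm (y1 - ys))\<^sup>2"
  proof -
    have "ys - y0 = (y1 - y0) + (ys - y1)" by simp
    hence "(norm (ys - y0))\<^sup>2 = (norm (y1 - y0))\<^sup>2 + 2 * inner (y1 - y0) (ys - y1) + (norm (ys - y1))\<^sup>2"
      by (metis nsq_add)
    thus ?thesis by (simp add: norm_minus_commute)
  qed
  have bsplit: "- inner b (ys - y1) = - inner b (ys - y0) + inner b (y1 - y0)"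
    by (simp add: inner_diff_right)
  have "beta * T * (2 * (Fy1 - Fys + Pnys - Pny1))
     \<le> beta * T * (2 * (Pny0 + inner b (y1 - y0) - Pny1)) + 2 * inner (y1 - y0) (ys - y1)"
  proof -
    have "beta * T * (Fy1 - Fys) \<le> inner (y1 - y0) (ys - y1) + beta * T * (- inner b (ys - y1))"
      using I4' by (simp add: algebra_simps)
    also have "beta * T * (- inner b (ys - y1)) \<le> beta * T * (Pny0 - Pnys + inner b (y1 - y0))"
      unfolding bsplit using I5 beta T by (intro mult_left_mono) auto
    finally show ?thesis by (simp add: algebra_simps)
  qed
  hence "beta * (2 * T * (Fy1 - Fys + Pnys - Pny1))
     \<le> beta * (2 * T * (Pny0 + inner b (y1 - y0) - Pny1) + (1 / beta) * (2 * inner (y1 - y0) (ys - y1)))"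
    using beta by (simp add: algebra_simps)
  hence ysum: "2 * T * (Fy1 - Fys + Pnys - Pny1)
     \<le> 2 * T * (Pny0 + inner b (y1 - y0) - Pny1) + (1 / beta) * (2 * inner (y1 - y0) (ys - y1))"
    using beta mult_le_cancel_left_pos[of beta] by blast
  show ?thesis using xsum ysum unfolding d_def yid by (simp add: algebra_simps)
qed

lemma prox_path:
  fixes c b p1 p2 :: "'b::real_inner"
  assumes l1: "0 < l1" and l12: "l1 \<le> l2"
    and V1: "inner ((c + l1 *\<^sub>R b) - p1) (p2 - p1) \<le> l1 * (H2 - H1)"
    and V2: "inner ((c + l2 *\<^sub>R b) - p2) (p1 - p2) \<le> l2 * (H1 - H2)"
  shows "l1 * norm (p2 - c) \<le> l2 * norm (p1 - c)"
proof -
  have l2: "0 < l2" using l1 l12 by simp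
  define u1 where "u1 = c - p1"
  define u2 where "u2 = c - p2"
  have "inner (u1 + l1 *\<^sub>R b) (u1 - u2) \<le> l1 * (H2 - H1)"
    using V1 unfolding u1_def u2_def by (simp add: algebra_simps)
  hence W1: "inner u1 (u1 - u2) + l1 * inner b (u1 - u2) \<le> l1 * (H2 - H1)"
    by (simp add: inner_add_left)
  have "inner (u2 + l2 *\<^sub>R b) (u2 - u1) \<le> l2 * (H1 - H2)"
    using V2 unfolding u1_def u2_def by (simp add: algebra_simps)
  hence W2: "inner u2 (u2 - u1) + l2 * inner b (u2 - u1) \<le> l2 * (H1 - H2)"
    by (simp add: inner_add_left)
  have W1': "l2 * inner u1 (u1 - u2) + l1 * l2 * inner b (u1 - u2) \<le> l1 * l2 * (H2 - H1)"
    using mult_left_mono[OF W1, of l2] l2 by (simp add: algebra_simps)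
  have W2': "l1 * inner u2 (u2 - u1) + l1 * l2 * inner b (u2 - u1) \<le> l1 * l2 * (H1 - H2)"
    using mult_left_mono[OF W2, of l1] l1 by (simp add: algebra_simps)
  have bb: "inner b (u2 - u1) = - inner b (u1 - u2)" by (simp add: inner_diff_right)
  have S: "l2 * inner u1 (u1 - u2) + l1 * inner u2 (u2 - u1) \<le> 0"
    using W1' W2' unfolding bb by (simp add: algebra_simps)
  define A where "A = norm u1"
  define B where "B = norm u2"
  define I where "I = inner u1 u2"
  have IAB: "I \<le> A * B" unfolding I_def A_def B_def by (rule norm_cauchy_schwarz)
  have S': "l2 * A\<^sup>2 + l1 * B\<^sup>2 \<le> (l1 + l2) * I"
    using S unfolding A_def B_def I_def
    by (simp add: inner_diff_right power2_norm_eq_inner inner_commute algebra_simps)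
  have A0: "A \<ge> 0" "B \<ge> 0" unfolding A_def B_def by auto
  have "l1 * B \<le> l2 * A"
  proof (rule ccontr)
    assume "\<not> ?thesis"
    hence h: "l2 * A < l1 * B" by simp
    have "l1 * A \<le> l2 * A" using l12 A0 by (intro mult_right_mono) auto
    hence "l1 * A < l1 * B" using h by linarith
    hence AB: "A < B" using l1 by simp
    have "0 < (l1 * B - l2 * A) * (B - A)" using h AB by (intro mult_pos_pos) auto
    moreover have "(l1 + l2) * I \<le> (l1 + l2) * (A * B)" using IAB l1 l2 by (intro mult_left_mono) auto
    ultimately show False using S' by (simp add: algebra_simps power2_eq_square)
  qed
  thus ?thesis unfolding A_def B_def u1_def u2_def by (simp add: norm_minus_commute)
qed

lemma csum_bound:
  fixes r c :: "nat \<Rightarrow> real" and M :: nat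
  assumes M: "M \<ge> 1" and eta: "0 \<le> eta"
    and r0: "\<And>k. k \<ge> 1 \<Longrightarrow> r k \<ge> 0"
    and cdef: "\<And>n. n \<ge> 1 \<Longrightarrow> c n = (if n = 1 then 0 else
        eta / real (card {max (n - M) 1 .. n - 1}) * (\<Sum>k\<in>{max (n - M) 1 .. n - 1}. r k))"
  shows "(\<Sum>n = 1..N. c n) \<le> eta * (\<Sum>k = 1..N. r k) + real M * eta * (\<Sum>k = 1..M. r k)"
proof -
  define RM where "RM = (\<Sum>k = 1..M. r k)"
  define c' where "c' n = (if n \<le> M then eta * RM else eta / real M * (\<Sum>k\<in>{n - M .. n - 1}. r k))" for n
  have RM0: "RM \<ge> 0" unfolding RM_def using r0 by (intro sum_nonneg) auto
  have cc: "c n \<le> c' n" if n: "n \<in> {1..N}" for n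
  proof (cases "n = 1")
    case True
    thus ?thesis using cdef[of n] n RM0 eta M unfolding c'_def by auto
  next
    case False
    hence n2: "n \<ge> 2" using n by auto
    show ?thesis
    proof (cases "n \<le> M")
      case True
      have I: "{max (n - M) 1 .. n - 1} = {1 .. n - 1}" using True by auto
      have card1: "real (card {1 .. n - 1}) \<ge> 1" using n2 by auto
      have s0: "(\<Sum>k = 1..n - 1. r k) \<ge> 0" using r0 by (intro sum_nonneg) auto
      have "(\<Sum>k = 1..n - 1. r k) \<le> RM" unfolding RM_def using True r0
        by (intro sum_mono2) auto
      have "c n = eta / real (card {1 .. n - 1}) * (\<Sum>k = 1..n - 1. r k)"
        using cdef[of n] n2 I by auto
      also have "\<dots> \<le> eta * (\<Sum>k = 1..n - 1. r k)"
      proof -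
        have "eta / real (card {1 .. n - 1}) \<le> eta / 1" using card1 eta
          by (intro divide_left_mono) auto
        hence "eta / real (card {1 .. n - 1}) \<le> eta" by simp
        thus ?thesis using s0 by (intro mult_right_mono) auto
      qed
      also have "\<dots> \<le> eta * RM" using \<open>(\<Sum>k = 1..n - 1. r k) \<le> RM\<close> eta by (intro mult_left_mono)
      finally show ?thesis unfolding c'_def using True by simp
    next
      case False
      have I: "{max (n - M) 1 .. n - 1} = {n - M .. n - 1}" using False by auto
      have "card {n - M .. n - 1} = M" using False M by auto
      thus ?thesis using cdef[of n] n2 I False unfolding c'_def by auto
    qed
  qed
  have S1: "(\<Sum>n = 1..N. c n) \<le> (\<Sum>n = 1..N. c' n)" using cc by (intro sum_mono)
  have S2: "(\<Sum>n = 1..N. c' n) = (\<Sum>n\<in>{1..N} \<inter> {n. n \<le> M}. eta * RM) + (\<Sum>n\<in>{1..N} \<inter> - {n. n \<le> M}. eta / real M * (\<Sum>k\<in>{n - M .. n - 1}. r k))"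
    unfolding c'_def by (rule sum.If_cases) simp
  have S3: "(\<Sum>n\<in>{1..N} \<inter> {n. n \<le> M}. eta * RM) \<le> real M * eta * RM"
  proof -
    have "card ({1..N} \<inter> {n. n \<le> M}) \<le> card {1..M}" by (intro card_mono) auto
    hence "real (card ({1..N} \<inter> {n. n \<le> M})) \<le> real M" by simp
    hence "real (card ({1..N} \<inter> {n. n \<le> M})) * (eta * RM) \<le> real M * (eta * RM)"
      using eta RM0 by (intro mult_right_mono) auto
    thus ?thesis by simp
  qed
  have S4: "(\<Sum>n\<in>{1..N} \<inter> - {n. n \<le> M}. eta / real M * (\<Sum>k\<in>{n - M .. n - 1}. r k))
      = eta / real M * (\<Sum>n\<in>{1..N} \<inter> - {n. n \<le> M}. (\<Sum>k\<in>{n - M .. n - 1}. r k))"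
    by (simp add: sum_distrib_left)
  have "(\<Sum>n\<in>{1..N} \<inter> - {n. n \<le> M}. (\<Sum>k\<in>{n - M .. n - 1}. r k))
      = (\<Sum>n\<in>{1..N} \<inter> - {n. n \<le> M}. (\<Sum>k\<in>{k. k \<in> {1..N} \<and> k \<in> {n - M .. n - 1}}. r k))"
  proof (rule sum.cong[OF refl])
    fix n assume "n \<in> {1..N} \<inter> - {n. n \<le> M}"
    hence "{k. k \<in> {1..N} \<and> k \<in> {n - M .. n - 1}} = {n - M .. n - 1}" using M by auto
    thus "(\<Sum>k\<in>{n - M .. n - 1}. r k) = (\<Sum>k\<in>{k. k \<in> {1..N} \<and> k \<in> {n - M .. n - 1}}. r k)" by simp
  qed
  also have "\<dots> = (\<Sum>k\<in>{1..N}. (\<Sum>n\<in>{n. n \<in> {1..N} \<inter> - {n. n \<le> M} \<and> k \<in> {n - M .. n - 1}}. r k))"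
    by (rule sum.swap_restrict) auto
  also have "\<dots> \<le> (\<Sum>k\<in>{1..N}. real M * r k)"
  proof (rule sum_mono)
    fix k assume k: "k \<in> {1..N}"
    have "{n. n \<in> {1..N} \<inter> - {n. n \<le> M} \<and> k \<in> {n - M .. n - 1}} \<subseteq> {k + 1 .. k + M}" by auto
    hence "card {n. n \<in> {1..N} \<inter> - {n. n \<le> M} \<and> k \<in> {n - M .. n - 1}} \<le> M"
      using card_mono[of "{k + 1 .. k + M}"] by fastforce
    thus "(\<Sum>n\<in>{n. n \<in> {1..N} \<inter> - {n. n \<le> M} \<and> k \<in> {n - M .. n - 1}}. r k) \<le> real M * r k"
      using r0[of k] k by (simp add: mult_right_mono)
  qed
  also have "\<dots> = real M * (\<Sum>k = 1..N. r k)" by (simp add: sum_distrib_left)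
  finally have S5: "(\<Sum>n\<in>{1..N} \<inter> - {n. n \<le> M}. (\<Sum>k\<in>{n - M .. n - 1}. r k)) \<le> real M * (\<Sum>k = 1..N. r k)" .
  have "eta / real M * (\<Sum>n\<in>{1..N} \<inter> - {n. n \<le> M}. (\<Sum>k\<in>{n - M .. n - 1}. r k))
        \<le> eta / real M * (real M * (\<Sum>k = 1..N. r k))"
    using S5 eta by (intro mult_left_mono) auto
  also have "\<dots> = eta * (\<Sum>k = 1..N. r k)" using M by simp
  finally have S6: "eta / real M * (\<Sum>n\<in>{1..N} \<inter> - {n. n \<le> M}. (\<Sum>k\<in>{n - M .. n - 1}. r k))
        \<le> eta * (\<Sum>k = 1..N. r k)" .
  show ?thesis using S1 S2 S3 S4 S6 unfolding RM_def by linarith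
qed

lemma convex_fn_jensen:
  fixes h :: "'a::real_vector \<Rightarrow> ereal"
  assumes pr: "proper_fn h" and cv: "convex_fn h" and fin: "finite S"
    and w1: "(\<Sum>i\<in>S. w i) = 1" and w0: "\<And>i. i \<in> S \<Longrightarrow> w i \<ge> 0"
    and pd: "\<And>i. i \<in> S \<Longrightarrow> p i \<in> edom h"
  shows "h (\<Sum>i\<in>S. w i *\<^sub>R p i) \<le> ereal (\<Sum>i\<in>S. w i * real_of_ereal (h (p i)))"
proof -
  let ?E = "{(x, t::real). h x \<le> ereal t}"
  have mem: "(p i, real_of_ereal (h (p i))) \<in> ?E" if "i \<in> S" for i
    using edom_finite[OF pr pd[OF that]] by simp
  have "(\<Sum>i\<in>S. w i *\<^sub>R (p i, real_of_ereal (h (p i)))) \<in> ?E"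
    by (rule convex_sum[OF fin cv[unfolded convex_fn_def] w1 w0 mem])
  moreover have "(\<Sum>i\<in>S. w i *\<^sub>R (p i, real_of_ereal (h (p i))))
      = ((\<Sum>i\<in>S. w i *\<^sub>R p i), (\<Sum>i\<in>S. w i * real_of_ereal (h (p i))))"
    by (simp add: prod_eq_iff fst_sum snd_sum)
  ultimately show ?thesis by simp
qed

lemma sq_sum_le: "((a::real) + b)\<^sup>2 \<le> 2 * a\<^sup>2 + 2 * b\<^sup>2"
proof -
  have "0 \<le> (a - b)\<^sup>2" by simp
  thus ?thesis by (simp add: power2_eq_square algebra_simps)
qed

theorem theorem3p2:
  fixes g :: "'a::euclidean_space \<Rightarrow> ereal" and f :: "'b::euclidean_space \<Rightarrow> ereal"
    and Phi :: "'a \<Rightarrow> 'b \<Rightarrow> real" and Phix :: "'a \<Rightarrow> 'b \<Rightarrow> 'a" and Phiy :: "'a \<Rightarrow> 'b \<Rightarrow> 'b"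
    and psi xi phi taumax nu mu eta beta :: real and M :: nat
    and x :: "nat \<Rightarrow> 'a" and y :: "nat \<Rightarrow> 'b" and z :: "nat \<Rightarrow> 'a" and tau :: "nat \<Rightarrow> real"
    and xs :: 'a and ys :: 'b
  assumes f_pcc: "proper_fn f" "closed_fn f" "convex_fn f"
    and g_pcc: "proper_fn g" "closed_fn g" "convex_fn g"
    and Phi_cont: "continuous_on (edom g \<times> edom (fconj f)) (\<lambda>(u, v). Phi u v)"
    \<comment> \<open>(A1)\<close>
    and A1: "saddle_set g (fconj f) Phix Phiy \<noteq> {}"
    and A1_fin: "\<forall>(u, v) \<in> saddle_set g (fconj f) Phix Phiy. \<bar>Lag g (fconj f) Phi u v\<bar> \<noteq> \<infinity>"
    \<comment> \<open>(A2)\<close>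
    and Phi_cvx: "\<forall>v \<in> edom (fconj f). convex_on (edom g) (\<lambda>u. Phi u v)"
    and Phi_ccv: "\<forall>u \<in> edom g. concave_on (edom (fconj f)) (\<lambda>v. Phi u v)"
    and Phi_dx: "\<forall>u \<in> edom g. \<forall>v \<in> edom (fconj f).
                   ((\<lambda>w. Phi w v) has_derivative (\<lambda>h. inner (Phix u v) h)) (at u)"
    and Phi_dy: "\<forall>u \<in> edom g. \<forall>v \<in> edom (fconj f).
                   ((\<lambda>w. Phi u w) has_derivative (\<lambda>h. inner (Phiy u v) h)) (at v)"
    and Phi_lip: "\<forall>X Y. bounded X \<longrightarrow> bounded Y \<longrightarrow>
        (\<exists>Lyy Lxx Lxy. Lyy \<ge> 0 \<and> Lxx \<ge> 0 \<and> Lxy > 0 \<and>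
          (\<forall>u \<in> X \<inter> edom g. \<forall>u' \<in> X \<inter> edom g. \<forall>v \<in> Y \<inter> edom (fconj f).
             \<forall>v' \<in> Y \<inter> edom (fconj f).
             norm (Phiy u v - Phiy u v') \<le> Lyy * norm (v - v') \<and>
             norm (Phix u v - Phix u' v') \<le> Lxx * norm (u - u') + Lxy * norm (v - v')))"
    \<comment> \<open>parameters of PDAc-L\<close>
    and psi: "1 < psi" "psi < 1 + sqrt 3"
    and xi: "xi > 0" and phi: "phi > 1"
    and omega: "2 * psi - xi - psi ^ 3 * phi / (1 + psi) > 0"
    and taumax: "taumax > 0" and nu: "0 < nu" "nu < 1" and mu: "0 < mu" "mu < 1"
    and eta: "0 \<le> eta" "eta < 1" and M: "M \<ge> 1" and beta: "beta > 0"
    and init: "x 0 \<in> edom g" "y 0 \<in> edom (fconj f)" "0 < tau 0" "tau 0 \<le> taumax"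
    and iter: "pdacl g (fconj f) Phi Phix Phiy psi xi phi taumax nu mu eta M beta x y z tau"
    and sad: "(xs, ys) \<in> saddle_set g (fconj f) Phix Phiy"
  shows "\<exists>C1 > 0. \<forall>N::nat \<ge> 1.
           (let s = (\<Sum>n = 1..N. tau n);
                xh = (1 / s) *\<^sub>R (\<Sum>n = 1..N. tau n *\<^sub>R x n);
                yh = (1 / s) *\<^sub>R (\<Sum>n = 1..N. tau n *\<^sub>R y n)
            in Lag g (fconj f) Phi xh ys - Lag g (fconj f) Phi xs yh \<le> ereal (C1 / real N))"
proof -
  define omega where "omega = 2 * psi - xi - psi ^ 3 * phi / (1 + psi)"
  define delta where "delta = (\<lambda>k. if k = 0 then 1 else tau k / tau (k - 1))"
  define ytr where "ytr = (\<lambda>n t. prox (beta * t) (fconj f) (y (n - 1) + (beta * t) *\<^sub>R Phiy (x n) (y (n - 1))))"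
  define rr where "rr = (\<lambda>n v. omega * delta (n - 1) * (norm (x n - x (n - 1)))\<^sup>2
                     + (1 / beta) * (norm (v - y (n - 1)))\<^sup>2)"
  define II where "II = (\<lambda>n. {max (n - M) 1 .. n - 1})"
  define cc where "cc = (\<lambda>n. if n = 1 then 0
                  else eta / real (card (II n)) * (\<Sum>k\<in>II n. rr k (y k)))"
  define ok where "ok = (\<lambda>n t. t * tau (n - 1) / xi * (norm (Phix (x n) (ytr n t) - Phix (x (n - 1)) (y (n - 1))))\<^sup>2
                    + 2 * t * (Phi (x n) (y (n - 1)) + inner (Phiy (x n) (y (n - 1))) (ytr n t - y (n - 1))
                             - Phi (x n) (ytr n t))
                         \<le> nu * rr n (ytr n t) + (1 - nu) * cc n)"
  define tbar where "tbar = (\<lambda>n. min (phi * tau (n - 1)) taumax)"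
  have IT: "z 0 = x 0 \<and>
       (\<forall>n\<ge>1.
          z n = ((psi - 1) / psi) *\<^sub>R x (n - 1) + (1 / psi) *\<^sub>R z (n - 1) \<and>
          x n = prox (tau (n - 1)) g (z n - tau (n - 1) *\<^sub>R Phix (x (n - 1)) (y (n - 1))) \<and>
          (\<exists>i::nat. tau n = tbar n * mu ^ i \<and> ok n (tau n) \<and>
                    (\<forall>j<i. \<not> ok n (tbar n * mu ^ j))) \<and>
          y n = ytr n (tau n))"
    using iter unfolding pdacl_def Let_def omega_def delta_def ytr_def rr_def II_def cc_def ok_def tbar_def .
  have zrec: "\<And>n. n \<ge> 1 \<Longrightarrow> z n = ((psi - 1) / psi) *\<^sub>R x (n - 1) + (1 / psi) *\<^sub>R z (n - 1)"
    and xrec: "\<And>n. n \<ge> 1 \<Longrightarrow> x n = prox (tau (n - 1)) g (z n - tau (n - 1) *\<^sub>R Phix (x (n - 1)) (y (n - 1)))"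
    and lsrch: "\<And>n. n \<ge> 1 \<Longrightarrow> \<exists>i::nat. tau n = tbar n * mu ^ i \<and> ok n (tau n) \<and> (\<forall>j<i. \<not> ok n (tbar n * mu ^ j))"
    and yrec: "\<And>n. n \<ge> 1 \<Longrightarrow> y n = ytr n (tau n)"
    and z0: "z 0 = x 0"
    using IT by auto
  define G where "G u = real_of_ereal (g u)" for u
  define Fs where "Fs v = real_of_ereal (fconj f v)" for v
  have xsd: "xs \<in> edom g" and ysd: "ys \<in> edom (fconj f)"
    and xsub: "- Phix xs ys \<in> subdiff g xs" and ysub: "Phiy xs ys \<in> subdiff (fconj f) ys"
    using sad unfolding saddle_set_def by auto
  have prF: "proper_fn (fconj f)" using fconj_proper[OF f_pcc(1)] ysd unfolding edom_def by auto
  have clF: "closed_fn (fconj f)" using fconj_closed[OF f_pcc(1)] .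
  have cvF: "convex_fn (fconj f)" using fconj_convex[OF f_pcc(1)] .
  have gxs: "g xs = ereal (G xs)" unfolding G_def using edom_finite[OF g_pcc(1) xsd] .
  have gmin: "ereal (inner (- Phix xs ys) u + (G xs - inner (- Phix xs ys) xs)) \<le> g u" for u
  proof -
    have "g xs + ereal (inner (- Phix xs ys) (u - xs)) \<le> g u" using xsub unfolding subdiff_def by blast
    thus ?thesis unfolding gxs by (simp add: inner_diff_right add_diff_eq)
  qed
  obtain u0 r0 where fmin0: "\<And>v. ereal (inner v u0 - r0) \<le> fconj f v" using fconj_minor[OF f_pcc(1)] by blast
  have fmin: "ereal (inner u0 v + (- r0)) \<le> fconj f v" for v using fmin0[of v] by (simp add: inner_commute)
  have PG: "prox lam g c \<in> edom g \<and> (\<forall>v\<in>edom g. inner (c - prox lam g c) (v - prox lam g c)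
           \<le> lam * (G v - G (prox lam g c)))" if lam: "lam > 0" for lam c
    using prox_vi[OF g_pcc(1) g_pcc(3) lam prox_exists[OF g_pcc(1) g_pcc(2) lam gmin]] unfolding G_def by blast
  have PF: "prox lam (fconj f) c \<in> edom (fconj f) \<and> (\<forall>v\<in>edom (fconj f). inner (c - prox lam (fconj f) c) (v - prox lam (fconj f) c)
           \<le> lam * (Fs v - Fs (prox lam (fconj f) c)))" if lam: "lam > 0" for lam c
    using prox_vi[OF prF cvF lam prox_exists[OF prF clF lam fmin]] unfolding Fs_def by blast
  have tau_step: "0 < tau n \<and> tau n \<le> taumax \<and> tau n \<le> phi * tau (n - 1)"
    if n: "n \<ge> 1" and prev: "0 < tau (n - 1)" for n
  proof -
    obtain i where i: "tau n = tbar n * mu ^ i" using lsrch[OF n] by blast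
    have tb: "0 < tbar n" "tbar n \<le> taumax" "tbar n \<le> phi * tau (n - 1)"
      unfolding tbar_def using prev phi taumax by auto
    have m: "0 < mu ^ i" "mu ^ i \<le> 1" using mu by (auto simp: power_le_one)
    have tm: "tbar n * mu ^ i \<le> tbar n" using tb(1) m by (simp add: mult_left_le)
    have tp: "0 < tbar n * mu ^ i" using tb(1) m by simp
    show ?thesis unfolding i using tb tm tp by linarith
  qed
  have tpos: "0 < tau n \<and> tau n \<le> taumax" for n
  proof (induction n)
    case 0 thus ?case using init by auto
  next
    case (Suc n) thus ?case using tau_step[of "Suc n"] by auto
  qed
  have tphi: "tau n \<le> phi * tau (n - 1)" if "n \<ge> 1" for n
    using tau_step[OF that] tpos[of "n - 1"] by auto
  have xd: "x n \<in> edom g" for n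
  proof (cases "n = 0")
    case True thus ?thesis using init by simp
  next
    case False thus ?thesis using xrec[of n] PG[of "tau (n - 1)"] tpos[of "n - 1"] by auto
  qed
  have ytrP: "ytr n t \<in> edom (fconj f) \<and> (\<forall>v\<in>edom (fconj f).
       inner ((y (n - 1) + (beta * t) *\<^sub>R Phiy (x n) (y (n - 1))) - ytr n t) (v - ytr n t)
           \<le> (beta * t) * (Fs v - Fs (ytr n t)))" if "t > 0" for n t
    unfolding ytr_def using PF[of "beta * t"] that beta by auto
  have yd: "y n \<in> edom (fconj f)" for n
  proof (cases "n = 0")
    case True thus ?thesis using init by simp
  next
    case False thus ?thesis using yrec[of n] ytrP[of "tau n" n] tpos[of n] by auto
  qed
  define J where "J n = G (x n) + Phi (x n) ys - Fs ys - G xs - Phi xs (y n) + Fs (y n)" for n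
  define A where "A k = (norm (z k - xs))\<^sup>2" for k
  define B where "B k = (norm (y k - ys))\<^sup>2" for k
  define r where "r n = rr n (y n)" for n
  define Qx where "Qx n = omega * (tau n / tau (n - 1)) * (norm (x (n + 1) - x n))\<^sup>2" for n
  define Qy where "Qy n = (1 / beta) * (norm (y n - y (n - 1)))\<^sup>2" for n
  define E where "E n = (psi / (psi - 1)) * A (n + 1) + (1 / beta) * B (n - 1)" for n
  have step: "2 * tau n * J n + E (n + 1) + Qx n + Qy n \<le> E n + nu * r n + (1 - nu) * cc n"
    if n: "n \<ge> 1" for n
  proof -
    have T: "tau n > 0" and T0: "tau (n - 1) > 0" using tpos by auto
    have dphi: "tau n / tau (n - 1) \<le> phi" using tphi[OF n] T0 by (simp add: divide_le_eq)
    have x1: "x (n + 1) = prox (tau n) g (z (n + 1) - tau n *\<^sub>R Phix (x n) (y n))"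
      using xrec[of "n + 1"] by simp
    have I1: "inner (z (n + 1) - tau n *\<^sub>R Phix (x n) (y n) - x (n + 1)) (xs - x (n + 1))
               \<le> tau n * (G xs - G (x (n + 1)))"
      using PG[OF T, of "z (n + 1) - tau n *\<^sub>R Phix (x n) (y n)"] xsd unfolding x1[symmetric] by blast
    have I2: "inner (z n - tau (n - 1) *\<^sub>R Phix (x (n - 1)) (y (n - 1)) - x n) (x (n + 1) - x n)
               \<le> tau (n - 1) * (G (x (n + 1)) - G (x n))"
      using PG[OF T0, of "z n - tau (n - 1) *\<^sub>R Phix (x (n - 1)) (y (n - 1))"] xd[of "n + 1"]
      unfolding xrec[OF n, symmetric] by blast
    have I3: "Phi (x n) (y n) + inner (Phix (x n) (y n)) (xs - x n) \<le> Phi xs (y n)"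
      using grad_ineq_convex[OF Phi_cvx[rule_format, OF yd[of n]] xd[of n] xsd] Phi_dx xd yd by blast
    have I4: "inner (y (n - 1) + (beta * tau n) *\<^sub>R Phiy (x n) (y (n - 1)) - y n) (ys - y n)
               \<le> beta * tau n * (Fs ys - Fs (y n))"
      using ytrP[OF T, of n] ysd unfolding yrec[OF n, symmetric] by blast
    have I5: "Phi (x n) ys \<le> Phi (x n) (y (n - 1)) + inner (Phiy (x n) (y (n - 1))) (ys - y (n - 1))"
      using grad_ineq_concave[OF Phi_ccv[rule_format, OF xd[of n]] yd[of "n - 1"] ysd] Phi_dy xd yd by blast
    have z1: "z (n + 1) = ((psi - 1) / psi) *\<^sub>R x n + (1 / psi) *\<^sub>R z n" using zrec[of "n + 1"] by simp
    have z2: "z (n + 2) = ((psi - 1) / psi) *\<^sub>R x (n + 1) + (1 / psi) *\<^sub>R z (n + 1)"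
      using zrec[of "n + 2"] by (simp add: numeral_2_eq_2)
    note SI = step_ineq[OF psi(1) xi beta T T0 dphi z1 z2 I1 I2 I3 I4 I5]
    have LS: "ok n (tau n)" using lsrch[OF n] by blast
    hence LS: "tau n * tau (n - 1) / xi * (norm (Phix (x n) (y n) - Phix (x (n - 1)) (y (n - 1))))\<^sup>2
                    + 2 * tau n * (Phi (x n) (y (n - 1)) + inner (Phiy (x n) (y (n - 1))) (y n - y (n - 1))
                             - Phi (x n) (y n))
                         \<le> nu * r n + (1 - nu) * cc n"
      unfolding ok_def r_def yrec[OF n, symmetric] .
    show ?thesis using SI LS unfolding J_def E_def Qx_def Qy_def A_def B_def omega_def
      by (simp add: algebra_simps numeral_2_eq_2)
  qed
  have Jnn: "J n \<ge> 0" for n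
  proof -
    have gxn: "g (x n) = ereal (G (x n))" unfolding G_def using edom_finite[OF g_pcc(1) xd[of n]] .
    have fys: "fconj f ys = ereal (Fs ys)" unfolding Fs_def using edom_finite[OF prF ysd] .
    have fyn: "fconj f (y n) = ereal (Fs (y n))" unfolding Fs_def using edom_finite[OF prF yd[of n]] .
    have "g xs + ereal (inner (- Phix xs ys) (x n - xs)) \<le> g (x n)" using xsub unfolding subdiff_def by blast
    hence a1: "G xs - inner (Phix xs ys) (x n - xs) \<le> G (x n)" unfolding gxs gxn by simp
    have a2: "Phi xs ys + inner (Phix xs ys) (x n - xs) \<le> Phi (x n) ys"
      using grad_ineq_convex[OF Phi_cvx[rule_format, OF ysd] xsd xd[of n]] Phi_dx xsd ysd by blast
    have "fconj f ys + ereal (inner (Phiy xs ys) (y n - ys)) \<le> fconj f (y n)" using ysub unfolding subdiff_def by blast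
    hence a3: "Fs ys + inner (Phiy xs ys) (y n - ys) \<le> Fs (y n)" unfolding fys fyn by simp
    have a4: "Phi xs (y n) \<le> Phi xs ys + inner (Phiy xs ys) (y n - ys)"
      using grad_ineq_concave[OF Phi_ccv[rule_format, OF xsd] ysd yd[of n]] Phi_dy xsd ysd by blast
    show ?thesis unfolding J_def using a1 a2 a3 a4 by linarith
  qed
  have omega0: "omega > 0" unfolding omega_def using omega .
  have rnn: "r k \<ge> 0" if "k \<ge> 1" for k
  proof -
    have "delta (k - 1) > 0" unfolding delta_def using tpos by auto
    thus ?thesis unfolding r_def rr_def using omega0 beta by (auto intro!: add_nonneg_nonneg mult_nonneg_nonneg)
  qed
  have ccdef: "cc n = (if n = 1 then 0 else
        eta / real (card {max (n - M) 1 .. n - 1}) * (\<Sum>k\<in>{max (n - M) 1 .. n - 1}. r k))" for n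
    unfolding cc_def II_def r_def ..
  have ccnn: "cc n \<ge> 0" for n
  proof -
    have "(\<Sum>k\<in>{max (n - M) 1 .. n - 1}. r k) \<ge> 0" using rnn by (intro sum_nonneg) auto
    thus ?thesis unfolding ccdef using eta by auto
  qed
  have csum: "(\<Sum>n = 1..N. cc n) \<le> eta * (\<Sum>k = 1..N. r k) + real M * eta * (\<Sum>k = 1..M. r k)" for N
    by (rule csum_bound[OF M eta(1) rnn ccdef])
  have tele: "2 * (\<Sum>n = 1..N. tau n * J n) + E (N + 1) + (\<Sum>n = 1..N. Qx n + Qy n)
       \<le> E 1 + nu * (\<Sum>n = 1..N. r n) + (1 - nu) * (\<Sum>n = 1..N. cc n)" for N
  proof (induction N)
    case 0 thus ?case by simp
  next
    case (Suc N)
    have "2 * tau (Suc N) * J (Suc N) + E (Suc N + 1) + Qx (Suc N) + Qy (Suc N)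
          \<le> E (Suc N) + nu * r (Suc N) + (1 - nu) * cc (Suc N)" using step[of "Suc N"] by simp
    thus ?case using Suc.IH by (simp add: algebra_simps)
  qed
  have Qsum: "(\<Sum>n = 2..N + 1. r n) + Qx (N + 1) \<le> (\<Sum>n = 1..N + 1. Qx n + Qy n)" for N
  proof (induction N)
    case 0
    have "Qy 1 \<ge> 0" unfolding Qy_def using beta by simp
    thus ?case by simp
  next
    case (Suc N)
    have rq: "r (N + 2) = Qx (N + 1) + Qy (N + 2)"
      unfolding r_def rr_def Qx_def Qy_def delta_def by simp
    have "(\<Sum>n = 2..Suc N + 1. r n) = (\<Sum>n = 2..N + 1. r n) + r (N + 2)" by simp
    moreover have "(\<Sum>n = 1..Suc N + 1. Qx n + Qy n) = (\<Sum>n = 1..N + 1. Qx n + Qy n) + (Qx (N + 2) + Qy (N + 2))" by simp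
    ultimately show ?case using Suc.IH rq by (simp add: numeral_2_eq_2)
  qed
  define Kc where "Kc = real M * eta * (\<Sum>k = 1..M. r k)"
  define K where "K = E 1 + (1 - nu) * Kc + r 1"
  have Kc0: "Kc \<ge> 0" unfolding Kc_def using eta rnn by (auto intro!: mult_nonneg_nonneg sum_nonneg)
  have Qxnn: "Qx n \<ge> 0" for n unfolding Qx_def using omega0 tpos[of n] tpos[of "n - 1"]
    by (auto intro!: mult_nonneg_nonneg)
  have mainb: "2 * (\<Sum>n = 1..N. tau n * J n) + E (N + 1) \<le> K" for N
  proof (cases N)
    case 0
    have "(1 - nu) * Kc \<ge> 0" using nu Kc0 by auto
    thus ?thesis using 0 rnn[of 1] unfolding K_def by simp
  next
    case (Suc N')
    define R2 where "R2 = (\<Sum>n = 2..N. r n)"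
    define Sc where "Sc = (\<Sum>n = 1..N. cc n)"
    define SQ where "SQ = (\<Sum>n = 1..N. Qx n + Qy n)"
    have Sr: "(\<Sum>n = 1..N. r n) = r 1 + R2" unfolding R2_def Suc
      by (subst sum.atLeast_Suc_atMost) (auto simp: numeral_2_eq_2)
    have R20: "R2 \<ge> 0" unfolding R2_def using rnn by (intro sum_nonneg) auto
    have T1: "2 * (\<Sum>n = 1..N. tau n * J n) + E (N + 1) + SQ \<le> E 1 + nu * (r 1 + R2) + (1 - nu) * Sc"
      using tele[of N] unfolding SQ_def Sc_def Sr .
    have T2: "R2 \<le> SQ" using Qsum[of N'] Qxnn[of "N' + 1"] unfolding R2_def SQ_def Suc by simp
    have T3: "Sc \<le> eta * (r 1 + R2) + Kc" using csum[of N] unfolding Sc_def Kc_def Sr .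
    have h1: "(1 - nu) * Sc \<le> (1 - nu) * (eta * (r 1 + R2) + Kc)" using T3 nu by (intro mult_left_mono) auto
    have h2: "(1 - nu) * (eta * R2) \<le> (1 - nu) * R2" using nu eta R20 by (intro mult_left_mono) (auto simp: mult_left_le_one_le)
    have h3: "(1 - nu) * (eta * r 1) \<le> (1 - nu) * r 1" using nu eta rnn[of 1] by (intro mult_left_mono) (auto simp: mult_left_le_one_le)
    have e1: "(1 - nu) * (eta * (r 1 + R2) + Kc) = (1 - nu) * (eta * r 1) + (1 - nu) * (eta * R2) + (1 - nu) * Kc"
      by (simp add: algebra_simps)
    have e2: "(1 - nu) * R2 = R2 - nu * R2" "(1 - nu) * r 1 = r 1 - nu * r 1" "nu * (r 1 + R2) = nu * r 1 + nu * R2"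
      by (simp_all add: algebra_simps)
    show ?thesis unfolding K_def using T1 T2 h1 h2 h3 e1 e2 by linarith
  qed
  have Enn: "(\<Sum>n = 1..N. tau n * J n) \<ge> 0" for N using tpos Jnn by (intro sum_nonneg) (metis less_imp_le mult_nonneg_nonneg)
  have EK: "E (N + 1) \<le> K" for N using mainb[of N] Enn[of N] by linarith
  have A0: "A k \<ge> 0" and B0: "B k \<ge> 0" for k unfolding A_def B_def by auto
  have psi1: "psi / (psi - 1) > 0" using psi by auto
  have Abnd: "A (N + 2) \<le> K * ((psi - 1) / psi)" for N
  proof -
    have "(1 / beta) * B N \<ge> 0" using B0[of N] beta by simp
    hence "(psi / (psi - 1)) * A (N + 2) \<le> K" using EK[of N] unfolding E_def
      by (simp add: numeral_2_eq_2)
    hence "((psi - 1) / psi) * ((psi / (psi - 1)) * A (N + 2)) \<le> ((psi - 1) / psi) * K"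
      using psi by (intro mult_left_mono) auto
    moreover have "((psi - 1) / psi) * (psi / (psi - 1)) = 1" using psi by (simp add: field_simps)
    ultimately have "A (N + 2) \<le> ((psi - 1) / psi) * K" by (simp add: mult.assoc[symmetric])
    thus ?thesis by (simp add: mult.commute)
  qed
  have Bbnd: "B N \<le> beta * K" for N
  proof -
    have "(psi / (psi - 1)) * A (N + 2) \<ge> 0" using A0[of "N + 2"] psi1 by (intro mult_nonneg_nonneg) auto
    hence "(1 / beta) * B N \<le> K" using EK[of N] unfolding E_def
      by (simp add: numeral_2_eq_2)
    hence "beta * ((1 / beta) * B N) \<le> beta * K" using beta by (intro mult_left_mono) auto
    thus ?thesis using beta by simp
  qed
  define Az where "Az = max (A 0) (max (A 1) (K * ((psi - 1) / psi)))"
  have Aall: "A k \<le> Az" for k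
  proof -
    consider "k = 0" | "k = 1" | N where "k = N + 2" by (metis add_2_eq_Suc' not0_implies_Suc One_nat_def)
    thus ?thesis unfolding Az_def using Abnd by cases (auto simp: le_max_iff_disj)
  qed
  define rz where "rz = sqrt Az"
  have zb: "norm (z k - xs) \<le> rz" for k
    unfolding rz_def using Aall[of k] unfolding A_def by (intro real_le_rsqrt) auto
  define ry where "ry = sqrt (beta * K)"
  have ybd: "norm (y n - ys) \<le> ry" for n
    unfolding ry_def using Bbnd[of n] unfolding B_def by (intro real_le_rsqrt) auto
  define Rx where "Rx = norm xs + (psi + 1) * rz / (psi - 1)"
  define Ry where "Ry = norm ys + ry"
  have xb: "norm (x n) \<le> Rx" for n
  proof -
    have e: "psi *\<^sub>R z (n + 1) = (psi - 1) *\<^sub>R x n + z n"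
    proof -
      have e1: "psi * ((psi - 1) / psi) = psi - 1" "psi * (1 / psi) = 1" using psi by auto
      have "psi *\<^sub>R z (n + 1) = (psi * ((psi - 1) / psi)) *\<^sub>R x n + (psi * (1 / psi)) *\<^sub>R z n"
        using zrec[of "n + 1"] by (simp add: scaleR_add_right)
      thus ?thesis unfolding e1 by simp
    qed
    have eq: "(psi - 1) *\<^sub>R (x n - xs) = psi *\<^sub>R (z (n + 1) - xs) - (z n - xs)"
      using e by (simp add: algebra_simps)
    have "(psi - 1) * norm (x n - xs) = norm ((psi - 1) *\<^sub>R (x n - xs))" using psi by simp
    also have "\<dots> \<le> norm (psi *\<^sub>R (z (n + 1) - xs)) + norm (z n - xs)"
      unfolding eq by (rule norm_triangle_ineq4)
    also have "norm (psi *\<^sub>R (z (n + 1) - xs)) = psi * norm (z (n + 1) - xs)" using psi by simp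
    finally have "(psi - 1) * norm (x n - xs) \<le> psi * norm (z (n + 1) - xs) + norm (z n - xs)" .
    also have "\<dots> \<le> psi * rz + rz" using zb[of "n + 1"] zb[of n] psi by (intro add_mono mult_left_mono) auto
    finally have "(psi - 1) * norm (x n - xs) \<le> (psi + 1) * rz" by (simp add: algebra_simps)
    hence "norm (x n - xs) \<le> (psi + 1) * rz / (psi - 1)" using psi by (simp add: field_simps)
    moreover have "norm (x n) \<le> norm xs + norm (x n - xs)" using norm_triangle_ineq[of xs "x n - xs"] by simp
    ultimately show ?thesis unfolding Rx_def by linarith
  qed
  have yb: "norm (y n) \<le> Ry" for n
  proof -
    have "norm (y n) \<le> norm ys + norm (y n - ys)" using norm_triangle_ineq[of ys "y n - ys"] by simp
    thus ?thesis unfolding Ry_def using ybd[of n] by linarith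
  qed
  define Ry2 where "Ry2 = Ry + 2 * Ry / mu"
  have Ry0: "Ry \<ge> 0" using yb[of 0] norm_ge_zero[of "y 0"] by linarith
  have Ry2: "Ry \<le> Ry2" unfolding Ry2_def using Ry0 mu by auto
  obtain Lyy Lxx Lxy where Lpos: "Lyy \<ge> 0" "Lxx \<ge> 0" "Lxy > 0"
    and LIP: "\<forall>u \<in> cball 0 Rx \<inter> edom g. \<forall>u' \<in> cball 0 Rx \<inter> edom g. \<forall>v \<in> cball 0 Ry2 \<inter> edom (fconj f).
             \<forall>v' \<in> cball 0 Ry2 \<inter> edom (fconj f).
             norm (Phiy u v - Phiy u v') \<le> Lyy * norm (v - v') \<and>
             norm (Phix u v - Phix u' v') \<le> Lxx * norm (u - u') + Lxy * norm (v - v')"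
    using Phi_lip[rule_format, OF bounded_cball bounded_cball, of 0 Rx 0 Ry2] by blast
  have LipY: "norm (Phiy u v - Phiy u v') \<le> Lyy * norm (v - v')"
    if "norm u \<le> Rx" "u \<in> edom g" "norm v \<le> Ry2" "v \<in> edom (fconj f)" "norm v' \<le> Ry2" "v' \<in> edom (fconj f)"
    for u v v' using LIP that by auto
  have LipX: "norm (Phix u v - Phix u' v') \<le> Lxx * norm (u - u') + Lxy * norm (v - v')"
    if "norm u \<le> Rx" "u \<in> edom g" "norm u' \<le> Rx" "u' \<in> edom g"
      "norm v \<le> Ry2" "v \<in> edom (fconj f)" "norm v' \<le> Ry2" "v' \<in> edom (fconj f)"
    for u u' v v' using LIP that by auto
  define W where "W = 2 * taumax * Lxy\<^sup>2 / xi + 2 * Lyy"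
  have W0: "W > 0" unfolding W_def using taumax Lpos xi by (auto intro!: add_pos_nonneg)
  define tb0 where "tb0 = min (nu * omega * xi / (2 * (Lxx\<^sup>2 + 1) * taumax)) (nu / (beta * W))"
  have "2 * (Lxx\<^sup>2 + 1) * taumax > 0" using taumax by (intro mult_pos_pos) (auto intro: add_nonneg_pos)
  hence tb00: "tb0 > 0" unfolding tb0_def using nu omega0 xi taumax beta W0
    by (auto intro!: divide_pos_pos mult_pos_pos)
  have okc: "ok n t" if n: "n \<ge> 1" and t0: "0 < t" and ttb: "t \<le> tb0" and vb: "norm (ytr n t) \<le> Ry2" for n t
  proof -
    define v where "v = ytr n t"
    have vd: "v \<in> edom (fconj f)" unfolding v_def using ytrP[OF t0] by blast
    have vb': "norm v \<le> Ry2" using vb unfolding v_def .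
    define a where "a = norm (x n - x (n - 1))"
    define bb where "bb = norm (v - y (n - 1))"
    define T0 where "T0 = tau (n - 1)"
    have T0p: "0 < T0" "T0 \<le> taumax" unfolding T0_def using tpos by auto
    have yb2: "norm (y (n - 1)) \<le> Ry2" using yb[of "n - 1"] Ry2 by linarith
    define th where "th = Phix (x n) v - Phix (x (n - 1)) (y (n - 1))"
    have thb: "norm th \<le> Lxx * a + Lxy * bb" unfolding th_def a_def bb_def
      by (rule LipX) (use xb xd vb' vd yb2 yd in auto)
    have "(norm th)\<^sup>2 \<le> (Lxx * a + Lxy * bb)\<^sup>2" using thb by (intro power_mono) auto
    also have "\<dots> \<le> 2 * (Lxx * a)\<^sup>2 + 2 * (Lxy * bb)\<^sup>2" by (rule sq_sum_le)
    finally have th2: "(norm th)\<^sup>2 \<le> 2 * Lxx\<^sup>2 * a\<^sup>2 + 2 * Lxy\<^sup>2 * bb\<^sup>2" by (simp add: power_mult_distrib)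
    define b where "b = Phiy (x n) (y (n - 1))"
    define Py where "Py = Phi (x n) (y (n - 1)) + inner b (v - y (n - 1)) - Phi (x n) v"
    have c1: "Phi (x n) (y (n - 1)) \<le> Phi (x n) v + inner (Phiy (x n) v) (y (n - 1) - v)"
      using grad_ineq_concave[OF Phi_ccv[rule_format, OF xd[of n]] vd yd[of "n - 1"]] Phi_dy xd vd by blast
    have "Py \<le> inner (b - Phiy (x n) v) (v - y (n - 1))"
      unfolding Py_def using c1 by (simp add: inner_diff_left inner_diff_right algebra_simps)
    also have "\<dots> \<le> norm (b - Phiy (x n) v) * bb" unfolding bb_def by (rule norm_cauchy_schwarz)
    also have "\<dots> \<le> (Lyy * bb) * bb"
    proof -
      have "norm (b - Phiy (x n) v) \<le> Lyy * norm (y (n - 1) - v)" unfolding b_def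
        by (rule LipY) (use xb xd vb' vd yb2 yd in auto)
      hence "norm (b - Phiy (x n) v) \<le> Lyy * bb" unfolding bb_def by (simp add: norm_minus_commute)
      thus ?thesis unfolding bb_def by (intro mult_right_mono) auto
    qed
    finally have pyb: "Py \<le> Lyy * bb\<^sup>2" by (simp add: power2_eq_square mult.assoc)
    have dl: "T0 / taumax \<le> delta (n - 1)"
    proof (cases "n - 1 = 0")
      case True thus ?thesis unfolding delta_def using T0p taumax by simp
    next
      case False
      have "T0 / taumax \<le> T0 / tau (n - 1 - 1)" using tpos[of "n - 1 - 1"] T0p
        by (intro divide_left_mono) auto
      thus ?thesis unfolding delta_def T0_def using False by simp
    qed
    have a0: "a\<^sup>2 \<ge> 0" "bb\<^sup>2 \<ge> 0" by auto
    have tT: "t * T0 / xi \<ge> 0" using t0 T0p xi by auto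
    have P1: "t * T0 / xi * (norm th)\<^sup>2 \<le> t * T0 / xi * (2 * Lxx\<^sup>2 * a\<^sup>2 + 2 * Lxy\<^sup>2 * bb\<^sup>2)"
      using th2 tT by (intro mult_left_mono) auto
    have P2: "2 * t * Py \<le> 2 * t * (Lyy * bb\<^sup>2)" using pyb t0 by (intro mult_left_mono) auto
    have Q1: "t * T0 / xi * (2 * Lxx\<^sup>2 * a\<^sup>2) \<le> nu * omega * delta (n - 1) * a\<^sup>2"
    proof -
      have tle: "t \<le> nu * omega * xi / (2 * (Lxx\<^sup>2 + 1) * taumax)" using ttb unfolding tb0_def by simp
      have dpos: "0 < 2 * (Lxx\<^sup>2 + 1) * taumax" using taumax by (intro mult_pos_pos) (auto intro: add_nonneg_pos)
      have t1: "t * (2 * (Lxx\<^sup>2 + 1) * taumax) \<le> nu * omega * xi"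
        using tle pos_le_divide_eq[OF dpos] by blast
      have "t * (2 * Lxx\<^sup>2) * taumax \<le> t * (2 * (Lxx\<^sup>2 + 1) * taumax)"
        using t0 taumax by (simp add: algebra_simps)
      hence t2: "t * (2 * Lxx\<^sup>2) * taumax \<le> nu * omega * xi" using t1 by linarith
      have "t * T0 / xi * (2 * Lxx\<^sup>2 * a\<^sup>2) = (t * (2 * Lxx\<^sup>2) * taumax) * (T0 / (xi * taumax) * a\<^sup>2)"
        using xi taumax by (simp add: field_simps)
      also have "\<dots> \<le> (nu * omega * xi) * (T0 / (xi * taumax) * a\<^sup>2)"
        using t2 T0p xi taumax by (intro mult_right_mono) auto
      also have "\<dots> = nu * omega * (T0 / taumax) * a\<^sup>2" using xi taumax by (simp add: field_simps)
      also have "\<dots> \<le> nu * omega * delta (n - 1) * a\<^sup>2"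
        using dl nu omega0 by (intro mult_right_mono mult_left_mono) auto
      finally show ?thesis .
    qed
    have Q2: "t * T0 / xi * (2 * Lxy\<^sup>2 * bb\<^sup>2) + 2 * t * (Lyy * bb\<^sup>2) \<le> nu * ((1 / beta) * bb\<^sup>2)"
    proof -
      have "t * T0 / xi * (2 * Lxy\<^sup>2 * bb\<^sup>2) = (t * (2 * Lxy\<^sup>2 * bb\<^sup>2) / xi) * T0" by simp
      also have "\<dots> \<le> (t * (2 * Lxy\<^sup>2 * bb\<^sup>2) / xi) * taumax"
        using T0p t0 xi by (intro mult_left_mono) auto
      finally have "t * T0 / xi * (2 * Lxy\<^sup>2 * bb\<^sup>2) + 2 * t * (Lyy * bb\<^sup>2) \<le> (t * W) * bb\<^sup>2"
        unfolding W_def by (simp add: algebra_simps)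
      also have "\<dots> \<le> (nu / beta) * bb\<^sup>2"
      proof -
        have "t \<le> nu / (beta * W)" using ttb unfolding tb0_def by simp
        moreover have "0 < beta * W" using beta W0 by simp
        ultimately have "t * (beta * W) \<le> nu" using pos_le_divide_eq by blast
        hence "t * W \<le> nu / beta" using beta by (simp add: pos_le_divide_eq algebra_simps)
        thus ?thesis by (intro mult_right_mono) auto
      qed
      finally show ?thesis by simp
    qed
    have rrv: "rr n v = omega * delta (n - 1) * a\<^sup>2 + (1 / beta) * bb\<^sup>2" unfolding rr_def a_def bb_def by simp
    have "(1 - nu) * cc n \<ge> 0" using nu ccnn by auto
    hence "t * T0 / xi * (norm th)\<^sup>2 + 2 * t * Py \<le> nu * rr n v + (1 - nu) * cc n"
      using P1 P2 Q1 Q2 unfolding rrv by (simp add: algebra_simps)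
    thus ?thesis unfolding ok_def v_def[symmetric] th_def[symmetric] T0_def[symmetric] b_def[symmetric] Py_def[symmetric] .
  qed
  have tlow: "min (tau (n - 1)) (mu * tb0) \<le> tau n" if n: "n \<ge> 1" for n
  proof -
    obtain i where i: "tau n = tbar n * mu ^ i" and iok: "\<forall>j<i. \<not> ok n (tbar n * mu ^ j)"
      using lsrch[OF n] by blast
    have T0p: "0 < tau (n - 1)" "tau (n - 1) \<le> taumax" using tpos by auto
    show ?thesis
    proof (cases "i = 0")
      case True
      have "tau (n - 1) \<le> phi * tau (n - 1)" using phi T0p by simp
      hence "tau (n - 1) \<le> tau n" using i True T0p unfolding tbar_def by simp
      thus ?thesis by simp
    next
      case False
      define j where "j = i - 1"
      have ji: "j < i" "i = Suc j" unfolding j_def using False by auto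
      define tp where "tp = tbar n * mu ^ j"
      have nok: "\<not> ok n tp" unfolding tp_def using iok ji by blast
      have tau_tp: "tau n = tp * mu" unfolding tp_def i using ji by simp
      have tp0: "tp > 0" unfolding tp_def tbar_def using T0p phi taumax mu by auto
      have Tn: "tau n > 0" using tpos by auto
      have "mu * tb0 \<le> tau n"
      proof (rule ccontr)
        assume "\<not> ?thesis"
        hence "tp * mu < tb0 * mu" unfolding tau_tp by (simp add: mult.commute)
        hence tptb: "tp \<le> tb0" using mu by simp
        define c where "c = y (n - 1)"
        define bv where "bv = Phiy (x n) (y (n - 1))"
        define p1 where "p1 = y n"
        define p2 where "p2 = ytr n tp"
        have p1e: "p1 = ytr n (tau n)" unfolding p1_def using yrec[OF n] .
        note P1 = ytrP[OF Tn, of n]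
        note P2 = ytrP[OF tp0, of n]
        have V1: "inner ((c + (beta * tau n) *\<^sub>R bv) - p1) (p2 - p1) \<le> (beta * tau n) * (Fs p2 - Fs p1)"
          using P1 P2 unfolding p1e p2_def c_def bv_def by blast
        have V2: "inner ((c + (beta * tp) *\<^sub>R bv) - p2) (p1 - p2) \<le> (beta * tp) * (Fs p1 - Fs p2)"
          using P1 P2 unfolding p1e p2_def c_def bv_def by blast
        have l1: "0 < beta * tau n" using beta Tn by simp
        have l12: "beta * tau n \<le> beta * tp" unfolding tau_tp using beta tp0 mu
          by (intro mult_left_mono) (auto simp: mult_left_le)
        have pp: "(beta * tau n) * norm (p2 - c) \<le> (beta * tp) * norm (p1 - c)"
          by (rule prox_path[OF l1 l12 V1 V2])
        hence "beta * (tp * (mu * norm (p2 - c))) \<le> beta * (tp * norm (p1 - c))" unfolding tau_tp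
          by (simp add: algebra_simps)
        hence "tp * (mu * norm (p2 - c)) \<le> tp * norm (p1 - c)" using beta by simp
        hence m1: "mu * norm (p2 - c) \<le> norm (p1 - c)" using tp0 by simp
        have "norm (p1 - c) \<le> norm p1 + norm c" by (rule norm_triangle_ineq4)
        also have "\<dots> \<le> 2 * Ry" using yb[of n] yb[of "n - 1"] unfolding p1_def c_def by simp
        finally have "mu * norm (p2 - c) \<le> 2 * Ry" using m1 by linarith
        hence m2: "norm (p2 - c) \<le> 2 * Ry / mu" using mu by (simp add: pos_le_divide_eq mult.commute)
        have "norm p2 \<le> norm c + norm (p2 - c)" using norm_triangle_ineq[of c "p2 - c"] by simp
        hence "norm p2 \<le> Ry2" using m2 yb[of "n - 1"] unfolding Ry2_def c_def by linarith
        hence "ok n tp" using okc[OF n tp0 tptb] unfolding p2_def by blast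
        thus False using nok by blast
      qed
      thus ?thesis by simp
    qed
  qed
  define tmin where "tmin = min (tau 0) (mu * tb0)"
  have tmin0: "tmin > 0" unfolding tmin_def using tpos[of 0] mu tb00 by simp
  have tminle: "tmin \<le> tau n" for n
  proof (induction n)
    case 0 thus ?case unfolding tmin_def by simp
  next
    case (Suc n)
    have "min (tau n) (mu * tb0) \<le> tau (Suc n)" using tlow[of "Suc n"] by simp
    moreover have "tmin \<le> mu * tb0" unfolding tmin_def by simp
    ultimately show ?case using Suc.IH by linarith
  qed
  have E0: "E n \<ge> 0" for n
  proof -
    have "(psi / (psi - 1)) * A (n + 1) \<ge> 0" using A0 psi1 by (intro mult_nonneg_nonneg) auto
    moreover have "(1 / beta) * B (n - 1) \<ge> 0" using B0 beta by (intro mult_nonneg_nonneg) auto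
    ultimately show ?thesis unfolding E_def by linarith
  qed
  have K0: "K \<ge> 0" using EK[of 0] E0[of 1] by simp
  have SJ: "(\<Sum>n = 1..N. tau n * J n) \<le> K / 2" for N using mainb[of N] E0[of "N + 1"] by linarith
  define C1 where "C1 = K / (2 * tmin) + 1"
  have C10: "C1 > 0" unfolding C1_def using K0 tmin0 by (auto intro: add_nonneg_pos)
  have fys: "fconj f ys = ereal (Fs ys)" unfolding Fs_def using edom_finite[OF prF ysd] .
  show ?thesis
  proof (intro exI[of _ C1] conjI allI impI)
    show "C1 > 0" by (rule C10)
    fix N :: nat assume N: "N \<ge> 1"
    define s where "s = (\<Sum>n = 1..N. tau n)"
    have sN: "real N * tmin \<le> s" unfolding s_def using sum_bounded_below[of "{1..N}" tmin tau] tminle by simp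
    have Nt: "real N * tmin > 0" using N tmin0 by simp
    have s0: "s > 0" using sN Nt by linarith
    define w where "w n = tau n / s" for n
    have w1: "(\<Sum>n = 1..N. w n) = 1"
    proof -
      have "(\<Sum>n = 1..N. w n) = (\<Sum>n = 1..N. tau n) / s" unfolding w_def by (simp add: sum_divide_distrib)
      thus ?thesis using s0 unfolding s_def by simp
    qed
    have w0: "w n \<ge> 0" for n unfolding w_def using tpos[of n] s0 by simp
    define xh where "xh = (1 / s) *\<^sub>R (\<Sum>n = 1..N. tau n *\<^sub>R x n)"
    define yh where "yh = (1 / s) *\<^sub>R (\<Sum>n = 1..N. tau n *\<^sub>R y n)"
    have xh: "xh = (\<Sum>n = 1..N. w n *\<^sub>R x n)" unfolding xh_def w_def by (simp add: scaleR_sum_right divide_inverse_commute)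
    have yh: "yh = (\<Sum>n = 1..N. w n *\<^sub>R y n)" unfolding yh_def w_def by (simp add: scaleR_sum_right divide_inverse_commute)
    have ne: "{1..N} \<noteq> {}" using N by simp
    have gJ: "g xh \<le> ereal (\<Sum>n = 1..N. w n * G (x n))" unfolding xh G_def
      by (rule convex_fn_jensen[OF g_pcc(1) g_pcc(3)]) (use w1 w0 xd in auto)
    have fJ: "fconj f yh \<le> ereal (\<Sum>n = 1..N. w n * Fs (y n))" unfolding yh Fs_def
      by (rule convex_fn_jensen[OF prF cvF]) (use w1 w0 yd in auto)
    have pJ: "Phi xh ys \<le> (\<Sum>n = 1..N. w n * Phi (x n) ys)" unfolding xh
      by (rule convex_on_sum[OF _ ne Phi_cvx[rule_format, OF ysd]]) (use w1 w0 xd in auto)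
    have cvq: "convex_on (edom (fconj f)) (\<lambda>v. - Phi xs v)"
      using Phi_ccv[rule_format, OF xsd] unfolding concave_on_def .
    have qJ: "- Phi xs yh \<le> (\<Sum>n = 1..N. w n * (- Phi xs (y n)))" unfolding yh
      using convex_on_sum[OF _ ne cvq, of w y] w1 w0 yd by auto
    have xhd: "xh \<in> edom g" using gJ unfolding edom_def by (auto intro: le_less_trans)
    have yhd: "yh \<in> edom (fconj f)" using fJ unfolding edom_def by (auto intro: le_less_trans)
    have gxh: "g xh = ereal (G xh)" unfolding G_def using edom_finite[OF g_pcc(1) xhd] .
    have fyh: "fconj f yh = ereal (Fs yh)" unfolding Fs_def using edom_finite[OF prF yhd] .
    have Gle: "G xh \<le> (\<Sum>n = 1..N. w n * G (x n))" using gJ unfolding gxh by simp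
    have Fle: "Fs yh \<le> (\<Sum>n = 1..N. w n * Fs (y n))" using fJ unfolding fyh by simp
    have Lag_eq: "Lag g (fconj f) Phi xh ys - Lag g (fconj f) Phi xs yh
        = ereal ((G xh + Phi xh ys - Fs ys) - (G xs + Phi xs yh - Fs yh))"
      unfolding Lag_def gxh fys gxs fyh by simp
    have cst: "(\<Sum>n = 1..N. w n * c) = c" for c
      using w1 by (simp add: sum_distrib_right[symmetric])
    have sumJ: "(\<Sum>n = 1..N. w n * J n) = (\<Sum>n = 1..N. w n * G (x n)) + (\<Sum>n = 1..N. w n * Phi (x n) ys)
        - Fs ys - G xs + (\<Sum>n = 1..N. w n * (- Phi xs (y n))) + (\<Sum>n = 1..N. w n * Fs (y n))"
    proof -
      have "(\<Sum>n = 1..N. w n * J n) = (\<Sum>n = 1..N. w n * G (x n) + w n * Phi (x n) ys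
          - w n * Fs ys - w n * G xs + w n * (- Phi xs (y n)) + w n * Fs (y n))"
        unfolding J_def by (simp add: algebra_simps)
      also have "\<dots> = (\<Sum>n = 1..N. w n * G (x n)) + (\<Sum>n = 1..N. w n * Phi (x n) ys)
          - (\<Sum>n = 1..N. w n * Fs ys) - (\<Sum>n = 1..N. w n * G xs) + (\<Sum>n = 1..N. w n * (- Phi xs (y n))) + (\<Sum>n = 1..N. w n * Fs (y n))"
        by (simp add: sum.distrib sum_subtractf sum_negf)
      finally show ?thesis unfolding cst .
    qed
    have r1: "(G xh + Phi xh ys - Fs ys) - (G xs + Phi xs yh - Fs yh) \<le> (\<Sum>n = 1..N. w n * J n)"
      unfolding sumJ using Gle Fle pJ qJ by linarith
    have "(\<Sum>n = 1..N. w n * J n) = (1 / s) * (\<Sum>n = 1..N. tau n * J n)"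
      unfolding w_def by (simp add: sum_distrib_left)
    also have "\<dots> \<le> (1 / s) * (K / 2)" using SJ[of N] s0 by (intro mult_left_mono) auto
    also have "\<dots> = (K / 2) / s" by simp
    also have "\<dots> \<le> (K / 2) / (real N * tmin)" using sN Nt K0 by (intro divide_left_mono) auto
    also have "\<dots> = (K / (2 * tmin)) / real N" by simp
    also have "\<dots> \<le> C1 / real N" unfolding C1_def using N by (intro divide_right_mono) auto
    finally have r2: "(G xh + Phi xh ys - Fs ys) - (G xs + Phi xs yh - Fs yh) \<le> C1 / real N" using r1 by linarith
    show "let s = (\<Sum>n = 1..N. tau n);
                xh = (1 / s) *\<^sub>R (\<Sum>n = 1..N. tau n *\<^sub>R x n);
                yh = (1 / s) *\<^sub>R (\<Sum>n = 1..N. tau n *\<^sub>R y n)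
            in Lag g (fconj f) Phi xh ys - Lag g (fconj f) Phi xs yh \<le> ereal (C1 / real N)"
      unfolding Let_def s_def[symmetric] xh_def[symmetric] yh_def[symmetric] Lag_eq using r2 by simp
  qed
qed

end
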